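(* Let $R=R_0\oplus R_1\oplus\cdots\oplus R_{p-1}$ be a commutative $\mathbb Z/p\mathbb Z$-graded $F$-algebra and $I=\sum_{i+j=p}R_iR_j\subset R_0$ (sum over $1\le i,j\le p-1$). The following are equivalent: (1) $X^G=\emptyset$, where $X^G=\mathrm{Spec}(R_0/I)$; (2) $I=R_0$; (3) $R_i^p=R_0$ for all $i=1,\dots,p-1$; (4) $R_1^p=R_0$; (5) $R_iR_{p-i}=R_0$ for each $i=1,\dots,p-1$; (6) for all $k,l\in\{0,\dots,p-1\}$ the multiplication map $R_k\otimes_{R_0}R_l\to R_{k+l}$ (index mod $p$) is an isomorphism; (7) the homomorphism $\Phi:R\otimes_{R_0}R\to F[t]/(t^p-1)\otimes_F R$ given by $a_k\otimes b_l\mapsto t^k\otimes a_kb_l$ for $a_k\in R_k$, $b_l\in R_l$ is an isomorphism.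
   Context: $p$ is a prime and $F$ a field. A $\mathbb Z/p\mathbb Z$-grading of $R$ corresponds to an action of $G=\mu_p=\mathrm{Spec}\,F[t]/(t^p-1)$ on $X=\mathrm{Spec}\,R$, with coaction $r_0+\cdots+r_{p-1}\mapsto\sum_i t^i\otimes r_i$. $R_i^p$ denotes the additive subgroup of $R$ generated by products of $p$ elements of $R_i$ (it lies in $R_0$); $R_iR_j$ likewise denotes the additive span of products. *)

theory Defs
  imports "HOL-Computational_Algebra.Primes" "HOL-Algebra.QuotRing" "HOL-Library.Poly_Mapping"
begin

definition F_algebra :: "('f::field \<Rightarrow> 'r::comm_ring_1) \<Rightarrow> bool" where
  "F_algebra phi \<longleftrightarrow> phi 1 = 1 \<and> (\<forall>a b. phi (a + b) = phi a + phi b) \<and>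
     (\<forall>a b. phi (a * b) = phi a * phi b)"

definition zp_grading :: "nat \<Rightarrow> ('f::field \<Rightarrow> 'r::comm_ring_1) \<Rightarrow> (nat \<Rightarrow> 'r set) \<Rightarrow> bool" where
  "zp_grading p phi Rg \<longleftrightarrow>
     (\<forall>i<p. 0 \<in> Rg i \<and> (\<forall>x\<in>Rg i. \<forall>y\<in>Rg i. x + y \<in> Rg i) \<and>
            (\<forall>c. \<forall>x\<in>Rg i. phi c * x \<in> Rg i)) \<and>
     (\<forall>r. \<exists>!f. (\<forall>i<p. f i \<in> Rg i) \<and> (\<forall>i\<ge>p. f i = 0) \<and> r = (\<Sum>i<p. f i)) \<and>
     (\<forall>i<p. \<forall>j<p. \<forall>x\<in>Rg i. \<forall>y\<in>Rg j. x * y \<in> Rg ((i + j) mod p))"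

definition hcomp :: "nat \<Rightarrow> (nat \<Rightarrow> ('r::comm_ring_1) set) \<Rightarrow> 'r \<Rightarrow> nat \<Rightarrow> 'r" where
  "hcomp p Rg a = (THE f. (\<forall>i<p. f i \<in> Rg i) \<and> (\<forall>i\<ge>p. f i = 0) \<and> a = (\<Sum>i<p. f i))"

definition mul_span :: "('r::comm_ring_1) set \<Rightarrow> 'r set \<Rightarrow> 'r set" where
  "mul_span A B = {\<Sum>k<(n::nat). of_int (c k) * a k * b k | n c a b. \<forall>k<n. a k \<in> A \<and> b k \<in> B}"

definition pow_span :: "('r::comm_ring_1) set \<Rightarrow> nat \<Rightarrow> 'r set" where
  "pow_span A p = {\<Sum>k<(n::nat). of_int (c k) * (\<Prod>j<p. a k j) | n c a. \<forall>k<n. \<forall>j<p. a k j \<in> A}"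

definition fixed_ideal :: "nat \<Rightarrow> (nat \<Rightarrow> ('r::comm_ring_1) set) \<Rightarrow> 'r set" where
  "fixed_ideal p Rg = {\<Sum>i\<in>{1..p-1}. x i | x. \<forall>i\<in>{1..p-1}. x i \<in> mul_span (Rg i) (Rg (p - i))}"

definition sub_ring :: "('r::comm_ring_1) set \<Rightarrow> 'r ring" where
  "sub_ring S = \<lparr>carrier = S, monoid.mult = (*), one = 1, zero = 0, add = (+)\<rparr>"

definition Spec :: "('a, 'b) ring_scheme \<Rightarrow> 'a set set" where
  "Spec A = {P. primeideal P A}"

text \<open>Tensor products over a subring A of A-submodules M, N of R, constructed as the free
  abelian group on M \<times> N (finitely supported integer-valued functions) modulo the subgroup
  generated by the biadditivity and A-balancedness relations.\<close>
inductive_set tensor_rels :: "('r::comm_ring_1) set \<Rightarrow> 'r set \<Rightarrow> 'r set \<Rightarrow> ('r \<times> 'r \<Rightarrow>\<^sub>0 int) set"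
  for A M N where
  zero: "0 \<in> tensor_rels A M N"
| add: "x \<in> tensor_rels A M N \<Longrightarrow> y \<in> tensor_rels A M N \<Longrightarrow> x + y \<in> tensor_rels A M N"
| neg: "x \<in> tensor_rels A M N \<Longrightarrow> - x \<in> tensor_rels A M N"
| lin1: "a \<in> M \<Longrightarrow> a' \<in> M \<Longrightarrow> b \<in> N \<Longrightarrow>
     Poly_Mapping.single (a + a', b) 1 - Poly_Mapping.single (a, b) 1 - Poly_Mapping.single (a', b) 1
       \<in> tensor_rels A M N"
| lin2: "a \<in> M \<Longrightarrow> b \<in> N \<Longrightarrow> b' \<in> N \<Longrightarrow>
     Poly_Mapping.single (a, b + b') 1 - Poly_Mapping.single (a, b) 1 - Poly_Mapping.single (a, b') 1
       \<in> tensor_rels A M N"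
| bal: "r \<in> A \<Longrightarrow> a \<in> M \<Longrightarrow> b \<in> N \<Longrightarrow>
     Poly_Mapping.single (r * a, b) 1 - Poly_Mapping.single (a, r * b) 1 \<in> tensor_rels A M N"

text \<open>Formal sums supported on M \<times> N (representatives of elements of M \<otimes>_A N).\<close>
definition formal_sums :: "'r set \<Rightarrow> 'r set \<Rightarrow> ('r \<times> 'r \<Rightarrow>\<^sub>0 int) set" where
  "formal_sums M N = {x. Poly_Mapping.keys x \<subseteq> M \<times> N}"

text \<open>The map M \<otimes>_A N \<rightarrow> P, m \<otimes> n \<mapsto> m n, is an isomorphism (well defined, injective, onto P).\<close>
definition mult_map_iso :: "('r::comm_ring_1) set \<Rightarrow> 'r set \<Rightarrow> 'r set \<Rightarrow> 'r set \<Rightarrow> bool" where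
  "mult_map_iso A M N P \<longleftrightarrow>
     (let mu = (\<lambda>x. \<Sum>(a, b)\<in>Poly_Mapping.keys x. of_int (Poly_Mapping.lookup x (a, b)) * a * b) in
       mu ` formal_sums M N = P \<and>
       (\<forall>x\<in>formal_sums M N. mu x = 0 \<longleftrightarrow> x \<in> tensor_rels A M N))"

text \<open>The map Phi : R \<otimes>_{R_0} R \<rightarrow> F[t]/(t^p-1) \<otimes>_F R, where the target is identified with
  R^p via the F-basis 1, t, ..., t^(p-1) of F[t]/(t^p-1): an element \<Sum>_k t^k \<otimes> r_k is the
  coefficient vector (r_0, ..., r_(p-1)), represented as a function nat \<Rightarrow> 'r vanishing
  from p on.\<close>
definition Phi_map :: "nat \<Rightarrow> (nat \<Rightarrow> ('r::comm_ring_1) set) \<Rightarrow> ('r \<times> 'r \<Rightarrow>\<^sub>0 int) \<Rightarrow> nat \<Rightarrow> 'r" where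
  "Phi_map p Rg x = (\<lambda>k. if k < p then
      (\<Sum>(a, b)\<in>Poly_Mapping.keys x. of_int (Poly_Mapping.lookup x (a, b)) * hcomp p Rg a k * b) else 0)"

definition Phi_iso :: "nat \<Rightarrow> (nat \<Rightarrow> ('r::comm_ring_1) set) \<Rightarrow> bool" where
  "Phi_iso p Rg \<longleftrightarrow>
     Phi_map p Rg ` formal_sums UNIV UNIV = {f. \<forall>k\<ge>p. f k = 0} \<and>
     (\<forall>x\<in>formal_sums UNIV UNIV. Phi_map p Rg x = (\<lambda>_. 0) \<longleftrightarrow> x \<in> tensor_rels (Rg 0) UNIV UNIV)"

end

theory Submission
  imports Defs
begin


lemma rot_sum:
  fixes h :: "nat \<Rightarrow> 'a::comm_monoid_add"
  assumes "j < p"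
  shows "(\<Sum>i<p. h ((i + p - j) mod p)) = (\<Sum>i<p. h i)"
proof (rule sum.reindex_bij_witness[where i="\<lambda>i. (i + j) mod p" and j="\<lambda>i. (i + p - j) mod p"])
  fix a assume a: "a \<in> {..<p}"
  have "((a + p - j) mod p + j) mod p = (a + p - j + j) mod p" by (simp add: mod_add_left_eq)
  also have "a + p - j + j = a + p" using assms by simp
  finally show "((a + p - j) mod p + j) mod p = a" using a by simp
next
  fix a assume a: "a \<in> {..<p}"
  have "((a + j) mod p + p - j) mod p = ((a + j) mod p + (p - j)) mod p" using assms by simp
  also have "\<dots> = (a + j + (p - j)) mod p" by (simp add: mod_add_left_eq)
  also have "a + j + (p - j) = a + p" using assms by simp
  finally show "((a + j) mod p + p - j) mod p = a" using a by simp
qed (use assms in auto)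

locale zpg =
  fixes p :: nat and phi :: "'f::field \<Rightarrow> 'r::comm_ring_1" and Rg :: "nat \<Rightarrow> 'r set"
  assumes prime: "prime p" and Falg: "F_algebra phi" and gr: "zp_grading p phi Rg"
begin

lemma p_gt1: "p > 1" using prime prime_gt_1_nat by blast
lemma p_pos: "p > 0" using p_gt1 by simp

lemma gr1: "\<forall>i<p. 0 \<in> Rg i \<and> (\<forall>x\<in>Rg i. \<forall>y\<in>Rg i. x + y \<in> Rg i) \<and>
            (\<forall>c. \<forall>x\<in>Rg i. phi c * x \<in> Rg i)"
  using gr unfolding zp_grading_def by (rule conjunct1)
lemma decomp_unique: "\<exists>!f. (\<forall>i<p. f i \<in> Rg i) \<and> (\<forall>i\<ge>p. f i = 0) \<and> r = (\<Sum>i<p. f i)"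
  using gr unfolding zp_grading_def by (metis (no_types))
lemma gr3: "\<forall>i<p. \<forall>j<p. \<forall>x\<in>Rg i. \<forall>y\<in>Rg j. x * y \<in> Rg ((i + j) mod p)"
  using gr unfolding zp_grading_def by (metis (no_types))

lemma R_zero: "i < p \<Longrightarrow> 0 \<in> Rg i" using gr1 by simp
lemma R_add: "i < p \<Longrightarrow> x \<in> Rg i \<Longrightarrow> y \<in> Rg i \<Longrightarrow> x + y \<in> Rg i"
  using gr1 by simp
lemma R_scal: "i < p \<Longrightarrow> x \<in> Rg i \<Longrightarrow> phi c * x \<in> Rg i"
  using gr1 by simp
lemma R_mul: "i < p \<Longrightarrow> j < p \<Longrightarrow> x \<in> Rg i \<Longrightarrow> y \<in> Rg j \<Longrightarrow> x * y \<in> Rg ((i + j) mod p)"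
  using gr3 by simp

lemma phi_neg1: "phi (-1) = -1"
proof -
  have a: "phi (a + b) = phi a + phi b" for a b using Falg unfolding F_algebra_def by blast
  have "phi (-1) + phi 1 = phi 0" using a[of "-1" 1] by simp
  moreover have "phi 0 = 0" using a[of 0 0] by simp
  moreover have "phi 1 = 1" using Falg unfolding F_algebra_def by blast
  ultimately show ?thesis by (simp add: eq_neg_iff_add_eq_0)
qed

lemma R_neg: "i < p \<Longrightarrow> x \<in> Rg i \<Longrightarrow> - x \<in> Rg i"
  using R_scal[of i x "-1"] by (simp add: phi_neg1)
lemma R_diff: "i < p \<Longrightarrow> x \<in> Rg i \<Longrightarrow> y \<in> Rg i \<Longrightarrow> x - y \<in> Rg i"
proof -
  assume i: "i < p" and x: "x \<in> Rg i" and y: "y \<in> Rg i"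
  have "x + - y \<in> Rg i" by (rule R_add[OF i x R_neg[OF i y]])
  then show ?thesis by simp
qed
lemma R_sum: "i < p \<Longrightarrow> (\<And>k. k \<in> S \<Longrightarrow> f k \<in> Rg i) \<Longrightarrow> sum f S \<in> Rg i"
proof (induction S rule: infinite_finite_induct)
  case (insert s S) then show ?case by (simp add: R_add)
qed (simp_all add: R_zero)
lemma R_nat: "i < p \<Longrightarrow> x \<in> Rg i \<Longrightarrow> of_nat n * x \<in> Rg i"
proof (induction n)
  case (Suc n) then show ?case by (simp add: algebra_simps R_add)
qed (simp add: R_zero)
lemma R_int: "i < p \<Longrightarrow> x \<in> Rg i \<Longrightarrow> of_int c * x \<in> Rg i"
proof (cases c)
  case (nonneg n)
  then show "i < p \<Longrightarrow> x \<in> Rg i \<Longrightarrow> of_int c * x \<in> Rg i" using R_nat[of i x n] by simp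
next
  case (neg n)
  assume i: "i < p" and x: "x \<in> Rg i"
  have "of_int c = - (of_nat (Suc n) :: 'r)" using neg by simp
  then have "of_int c * x = - (of_nat (Suc n) * x)" by (simp only: minus_mult_left)
  then show ?thesis using R_nat[OF i x, of "Suc n"] R_neg[OF i] by simp
qed

definition hc :: "'r \<Rightarrow> nat \<Rightarrow> 'r" where "hc = hcomp p Rg"

lemma hc_spec: "(\<forall>i<p. hc a i \<in> Rg i) \<and> (\<forall>i\<ge>p. hc a i = 0) \<and> a = (\<Sum>i<p. hc a i)"
  unfolding hc_def hcomp_def using theI'[OF decomp_unique[of a]] by simp

lemma hc_in: "i < p \<Longrightarrow> hc a i \<in> Rg i" using hc_spec by blast
lemma hc_ge: "i \<ge> p \<Longrightarrow> hc a i = 0" using hc_spec by blast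
lemma hc_sum: "a = (\<Sum>i<p. hc a i)" using hc_spec by blast

lemma hc_eq:
  assumes "\<forall>i<p. f i \<in> Rg i" "\<forall>i\<ge>p. f i = 0" "a = (\<Sum>i<p. f i)"
  shows "hc a = f"
proof -
  obtain g where g: "(\<forall>i<p. g i \<in> Rg i) \<and> (\<forall>i\<ge>p. g i = 0) \<and> a = (\<Sum>i<p. g i)"
     "\<And>h. (\<forall>i<p. h i \<in> Rg i) \<and> (\<forall>i\<ge>p. h i = 0) \<and> a = (\<Sum>i<p. h i) \<Longrightarrow> h = g"
    using decomp_unique[of a] by (elim ex1E) auto
  have "hc a = g" using g(2) hc_spec[of a] by simp
  moreover have "f = g" using g(2) assms by simp
  ultimately show ?thesis by simp
qed

lemma hc_homog: "k < p \<Longrightarrow> a \<in> Rg k \<Longrightarrow> hc a = (\<lambda>i. if i = k then a else 0)"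
  by (rule hc_eq) (auto intro: R_zero)

lemma hc_add: "hc (a + b) = (\<lambda>i. hc a i + hc b i)"
  by (rule hc_eq) (auto simp: hc_in hc_ge R_add sum.distrib hc_sum[symmetric])

lemma hc_neg: "hc (- a) = (\<lambda>i. - hc a i)"
  by (rule hc_eq) (auto simp: hc_in hc_ge R_neg sum_negf hc_sum[symmetric])

lemma hc_diff: "hc (a - b) = (\<lambda>i. hc a i - hc b i)"
  using hc_add[of a "-b"] hc_neg[of b] by simp

lemma hc_zero: "hc 0 = (\<lambda>i. 0)"
  by (rule hc_eq) (auto intro: R_zero)

lemma hc_sumf: "finite S \<Longrightarrow> hc (sum f S) = (\<lambda>i. \<Sum>s\<in>S. hc (f s) i)"
  by (induction S rule: finite_induct) (auto simp: hc_zero hc_add)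

lemma mod_shift: "k < p \<Longrightarrow> i < p \<Longrightarrow> (k + (i + p - k) mod p) mod p = i"
proof -
  assume k: "k < p" and i: "i < p"
  have "(k + (i + p - k) mod p) mod p = (k + (i + p - k)) mod p" by (simp add: mod_add_right_eq)
  also have "k + (i + p - k) = i + p" using k by simp
  finally show ?thesis using i by simp
qed

lemma hc_mul_homog:
  assumes k: "k < p" and a: "a \<in> Rg k"
  shows "hc (a * b) = (\<lambda>i. if i < p then a * hc b ((i + p - k) mod p) else 0)"
proof (rule hc_eq)
  show "\<forall>i<p. (if i < p then a * hc b ((i + p - k) mod p) else 0) \<in> Rg i"
  proof (intro allI impI)
    fix i assume i: "i < p"
    have "a * hc b ((i + p - k) mod p) \<in> Rg ((k + (i + p - k) mod p) mod p)"
      by (rule R_mul) (use k a p_pos in \<open>auto intro: hc_in\<close>)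
    then show "(if i < p then a * hc b ((i + p - k) mod p) else 0) \<in> Rg i"
      using mod_shift[OF k i] i by simp
  qed
  show "\<forall>i\<ge>p. (if i < p then a * hc b ((i + p - k) mod p) else 0) = 0" by simp
  have "a * b = (\<Sum>i<p. a * hc b i)" by (subst hc_sum[of b]) (simp add: sum_distrib_left)
  also have "\<dots> = (\<Sum>i<p. a * hc b ((i + p - k) mod p))"
    by (rule rot_sum[OF k, symmetric])
  finally show "a * b = (\<Sum>i<p. if i < p then a * hc b ((i + p - k) mod p) else 0)" by simp
qed

lemma one_R0: "1 \<in> Rg 0"
proof -
  define e where "e = hc 1 0"
  have homog: "e * x = x" if j: "j < p" and x: "x \<in> Rg j" for j x
  proof -
    have "hc (1 * x) = (\<lambda>i. if i < p then x * hc 1 ((i + p - j) mod p) else 0)"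
      using hc_mul_homog[OF j x, of 1] by (simp add: mult.commute)
    moreover have "hc (1 * x) = (\<lambda>i. if i = j then x else 0)" using hc_homog[OF j x] by simp
    ultimately have "x * hc 1 ((j + p - j) mod p) = x" by (metis j)
    then show ?thesis unfolding e_def by (simp add: mult.commute)
  qed
  have "e * 1 = 1"
  proof -
    have "e * 1 = (\<Sum>i<p. e * hc 1 i)" by (subst hc_sum[of 1]) (simp add: sum_distrib_left)
    also have "\<dots> = (\<Sum>i<p. hc 1 i)" using homog hc_in by (intro sum.cong) auto
    also have "\<dots> = 1" using hc_sum[of 1] by simp
    finally show ?thesis .
  qed
  then have "e = 1" by simp
  then show ?thesis unfolding e_def using hc_in p_pos by metis
qed

lemma hc_R0_mul: "r \<in> Rg 0 \<Longrightarrow> i < p \<Longrightarrow> hc (r * a) i = r * hc a i"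
  using hc_mul_homog[of 0 r a] p_pos by simp

lemma R0_mul: "r \<in> Rg 0 \<Longrightarrow> i < p \<Longrightarrow> x \<in> Rg i \<Longrightarrow> r * x \<in> Rg i"
  using R_mul[of 0 i r x] p_pos by simp

lemma R_pow: "j < p \<Longrightarrow> x \<in> Rg j \<Longrightarrow> x ^ n \<in> Rg ((n * j) mod p)"
proof (induction n)
  case 0 then show ?case using one_R0 by simp
next
  case (Suc n)
  have "x * x ^ n \<in> Rg ((j + (n * j) mod p) mod p)"
    by (rule R_mul) (use Suc p_pos in auto)
  moreover have "(j + (n * j) mod p) mod p = (Suc n * j) mod p" by (simp add: mod_add_right_eq)
  ultimately show ?case by simp
qed

end



lemma sum_concat:
  fixes f g :: "nat \<Rightarrow> 'a::comm_monoid_add"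
  shows "(\<Sum>k<n+m. if k<n then f k else g (k-n)) = (\<Sum>k<n. f k) + (\<Sum>k<m. g k)"
proof (induction m)
  case 0 then show ?case by simp
next
  case (Suc m)
  have "(\<Sum>k<n+Suc m. if k<n then f k else g (k-n)) = (\<Sum>k<n+m. if k<n then f k else g (k-n)) + g m"
    by simp
  then show ?case using Suc by (simp add: add.assoc)
qed

lemma ex_mult_inv:
  fixes p :: nat
  assumes p: "prime p" and j: "0 < j" "j < p" and i: "i < p"
  shows "\<exists>s. (s * j) mod p = i"
proof -
  have "coprime j p" using p j
    using prime_imp_coprime[OF p, of j] nat_dvd_not_less[of j p] by (simp add: coprime_commute)
  then have g: "gcd j p = 1" by simp
  obtain x y where xy: "j * x = p * y + gcd j p" using bezout_nat[of j p] j by auto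
  have "(x * i * j) mod p = (i * (j * x)) mod p" by (simp add: ac_simps)
  also have "\<dots> = (i + (i * y) * p) mod p" using xy g by (simp add: algebra_simps)
  also have "\<dots> = i mod p" by simp
  finally show ?thesis using i by auto
qed

context zpg begin

lemma R0_mul2: "r \<in> Rg 0 \<Longrightarrow> s \<in> Rg 0 \<Longrightarrow> r * s \<in> Rg 0"
  using R0_mul p_pos by blast

lemma R0_int: "of_int c \<in> Rg 0"
  using R_int[of 0 1 c] one_R0 p_pos by simp

lemma R_prod: assumes "i < p" "finite S" "\<And>j. j \<in> S \<Longrightarrow> a j \<in> Rg i" shows "(\<Prod>j\<in>S. a j) \<in> Rg ((card S * i) mod p)"
  using assms(2,3)
proof (induction S rule: finite_induct)
  case empty then show ?case using one_R0 by simp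
next
  case (insert x S)
  have "a x * prod a S \<in> Rg ((i + (card S * i) mod p) mod p)"
    by (rule R_mul) (use insert p_pos assms(1) in auto)
  moreover have "(i + (card S * i) mod p) mod p = (card (insert x S) * i) mod p"
    using insert by (simp add: mod_add_right_eq)
  ultimately show ?case using insert by simp
qed

lemma mul_span_sub: "i < p \<Longrightarrow> j < p \<Longrightarrow> mul_span (Rg i) (Rg j) \<subseteq> Rg ((i + j) mod p)"
  unfolding mul_span_def
proof (safe)
  fix n c a b assume i: "i < p" and j: "j < p" and h: "\<forall>k<n. a k \<in> Rg i \<and> b k \<in> Rg j"
  show "(\<Sum>k<n. of_int (c k) * a k * b k) \<in> Rg ((i + j) mod p)"
  proof (rule R_sum)
    show "(i + j) mod p < p" using p_pos by simp
    fix k assume "k \<in> {..<n}"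
    then have "a k * b k \<in> Rg ((i + j) mod p)" using h i j R_mul by auto
    then show "of_int (c k) * a k * b k \<in> Rg ((i + j) mod p)"
      using R_int[of "(i+j) mod p" "a k * b k" "c k"] p_pos by (simp add: mult.assoc)
  qed
qed

lemma mul_spanE:
  assumes "x \<in> mul_span A B"
  obtains n c a b where "x = (\<Sum>k<(n::nat). of_int (c k) * a k * b k)" "\<forall>k<n. a k \<in> A \<and> b k \<in> B"
  using assms unfolding mul_span_def by (elim CollectE exE conjE) (rule that, assumption+)

lemma mul_spanI:
  "x = (\<Sum>k<(n::nat). of_int (c k) * a k * b k) \<Longrightarrow> \<forall>k<n. a k \<in> A \<and> b k \<in> B \<Longrightarrow> x \<in> mul_span A B"
  unfolding mul_span_def by (rule CollectI, intro exI conjI)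

lemma mul_span_zero: "0 \<in> mul_span A B"
  unfolding mul_span_def by (rule CollectI, rule exI[of _ 0]) auto

lemma mul_span_prod: "a \<in> A \<Longrightarrow> b \<in> B \<Longrightarrow> a * b \<in> mul_span A B"
  unfolding mul_span_def
  by (rule CollectI, rule exI[of _ 1], rule exI[of _ "\<lambda>_. 1"], rule exI[of _ "\<lambda>_. a"],
      rule exI[of _ "\<lambda>_. b"]) simp

lemma mul_span_add: assumes "x \<in> mul_span A B" "y \<in> mul_span A B" shows "x + y \<in> mul_span A B"
proof -
  obtain n c a b where x: "x = (\<Sum>k<(n::nat). of_int (c k) * a k * b k)" "\<forall>k<n. a k \<in> A \<and> b k \<in> B"
    using assms(1) by (rule mul_spanE)
  obtain m c' a' b' where y: "y = (\<Sum>k<(m::nat). of_int (c' k) * a' k * b' k)" "\<forall>k<m. a' k \<in> A \<and> b' k \<in> B"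
    using assms(2) by (rule mul_spanE)
  define C where "C k = (if k < n then c k else c' (k - n))" for k :: nat
  define A' where "A' k = (if k < n then a k else a' (k - n))" for k :: nat
  define B' where "B' k = (if k < n then b k else b' (k - n))" for k :: nat
  have "x + y = (\<Sum>k<n+m. if k<n then of_int (c k) * a k * b k else of_int (c' (k-n)) * a' (k-n) * b' (k-n))"
    using x y sum_concat[where n=n and m=m and f="\<lambda>k. of_int (c k) * a k * b k" and g="\<lambda>k. of_int (c' k) * a' k * b' k"] by simp
  also have "\<dots> = (\<Sum>k<n+m. of_int (C k) * A' k * B' k)"
    by (rule sum.cong) (auto simp: C_def A'_def B'_def)
  finally have "x + y = (\<Sum>k<n+m. of_int (C k) * A' k * B' k)" .
  moreover have "\<forall>k<n+m. A' k \<in> A \<and> B' k \<in> B" using x y by (auto simp: A'_def B'_def)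
  ultimately show ?thesis by (rule mul_spanI)
qed

lemma mul_span_sumf: "(\<And>s. s \<in> S \<Longrightarrow> f s \<in> mul_span A B) \<Longrightarrow> sum f S \<in> mul_span A B"
  by (induction S rule: infinite_finite_induct) (auto simp: mul_span_zero mul_span_add)

lemma mul_span_neg: assumes "x \<in> mul_span A B" shows "- x \<in> mul_span A B"
proof -
  obtain n c a b where x: "x = (\<Sum>k<(n::nat). of_int (c k) * a k * b k)" "\<forall>k<n. a k \<in> A \<and> b k \<in> B"
    using assms(1) by (rule mul_spanE)
  have "- x = (\<Sum>k<(n::nat). of_int (- c k) * a k * b k)" using x by (simp add: sum_negf)
  then show ?thesis using x(2) by (rule mul_spanI)
qed

lemma mul_span_R0: assumes "x \<in> mul_span (Rg i) B" "r \<in> Rg 0" "i < p" shows "r * x \<in> mul_span (Rg i) B"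
proof -
  obtain n c a b where x: "x = (\<Sum>k<(n::nat). of_int (c k) * a k * b k)" "\<forall>k<n. a k \<in> Rg i \<and> b k \<in> B"
    using assms(1) by (rule mul_spanE)
  have "r * x = (\<Sum>k<(n::nat). of_int (c k) * (r * a k) * b k)" using x by (simp add: sum_distrib_left ac_simps)
  moreover have "\<forall>k<n. r * a k \<in> Rg i \<and> b k \<in> B" using x assms R0_mul by auto
  ultimately show ?thesis by (rule mul_spanI)
qed

lemma pow_span_sub: "i < p \<Longrightarrow> pow_span (Rg i) p \<subseteq> Rg 0"
  unfolding pow_span_def
proof (safe)
  fix n c a assume i: "i < p" and h: "\<forall>k<n. \<forall>j<p. a k j \<in> Rg i"
  show "(\<Sum>k<n. of_int (c k) * (\<Prod>j<p. a k j)) \<in> Rg 0"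
  proof (rule R_sum)
    show "0 < p" using p_pos .
    fix k assume "k \<in> {..<n}"
    then have "(\<Prod>j<p. a k j) \<in> Rg ((card {..<p} * i) mod p)" using h i by (intro R_prod) auto
    then have "(\<Prod>j<p. a k j) \<in> Rg 0" by simp
    then show "of_int (c k) * (\<Prod>j<p. a k j) \<in> Rg 0" using R_int p_pos by blast
  qed
qed

lemma pow_spanE:
  assumes "x \<in> pow_span A q"
  obtains n c a where "x = (\<Sum>k<(n::nat). of_int (c k) * (\<Prod>j<q. a k j))" "\<forall>k<n. \<forall>j<q. a k j \<in> A"
  using assms unfolding pow_span_def by (elim CollectE exE conjE) (rule that, assumption+)

lemma pow_spanI:
  "x = (\<Sum>k<(n::nat). of_int (c k) * (\<Prod>j<q. a k j)) \<Longrightarrow> \<forall>k<n. \<forall>j<q. a k j \<in> A \<Longrightarrow> x \<in> pow_span A q"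
  unfolding pow_span_def by (rule CollectI, intro exI conjI)

lemma pow_span_zero: "0 \<in> pow_span A q"
  unfolding pow_span_def by (rule CollectI, rule exI[of _ 0]) auto

lemma pow_span_power: "x \<in> A \<Longrightarrow> x ^ q \<in> pow_span A q"
  unfolding pow_span_def
  by (rule CollectI, rule exI[of _ 1], rule exI[of _ "\<lambda>_. 1"], rule exI[of _ "\<lambda>_ _. x"]) simp

lemma pow_span_add: assumes "x \<in> pow_span A q" "y \<in> pow_span A q" shows "x + y \<in> pow_span A q"
proof -
  obtain n c a where x: "x = (\<Sum>k<(n::nat). of_int (c k) * (\<Prod>j<q. a k j))" "\<forall>k<n. \<forall>j<q. a k j \<in> A"
    using assms(1) by (rule pow_spanE)
  obtain m c' a' where y: "y = (\<Sum>k<(m::nat). of_int (c' k) * (\<Prod>j<q. a' k j))" "\<forall>k<m. \<forall>j<q. a' k j \<in> A"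
    using assms(2) by (rule pow_spanE)
  define C where "C k = (if k < n then c k else c' (k - n))" for k :: nat
  define A' where "A' k = (if k < n then a k else a' (k - n))" for k :: nat
  have "x + y = (\<Sum>k<n+m. if k<n then of_int (c k) * (\<Prod>j<q. a k j) else of_int (c' (k-n)) * (\<Prod>j<q. a' (k-n) j))"
    using x y sum_concat[where n=n and m=m and f="\<lambda>k. of_int (c k) * (\<Prod>j<q. a k j)" and g="\<lambda>k. of_int (c' k) * (\<Prod>j<q. a' k j)"] by simp
  also have "\<dots> = (\<Sum>k<n+m. of_int (C k) * (\<Prod>j<q. A' k j))"
    by (rule sum.cong) (auto simp: C_def A'_def)
  finally have "x + y = (\<Sum>k<n+m. of_int (C k) * (\<Prod>j<q. A' k j))" .
  moreover have "\<forall>k<n+m. \<forall>j<q. A' k j \<in> A" using x y by (auto simp: A'_def)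
  ultimately show ?thesis by (rule pow_spanI)
qed

lemma pow_span_sumf: "(\<And>s. s \<in> S \<Longrightarrow> f s \<in> pow_span A q) \<Longrightarrow> sum f S \<in> pow_span A q"
  by (induction S rule: infinite_finite_induct) (auto simp: pow_span_zero pow_span_add)

lemma pow_span_R0: assumes "x \<in> pow_span (Rg i) p" "r \<in> Rg 0" "i < p" shows "r * x \<in> pow_span (Rg i) p"
proof -
  obtain n c a where x: "x = (\<Sum>k<(n::nat). of_int (c k) * (\<Prod>j<p. a k j))" "\<forall>k<n. \<forall>j<p. a k j \<in> Rg i"
    using assms(1) by (rule pow_spanE)
  define A' where "A' k j = (if j = 0 then r * a k j else a k j)" for k j
  have pr: "(\<Prod>j<p. A' k j) = r * (\<Prod>j<p. a k j)" for k
  proof -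
    obtain q where q: "p = Suc q" using p_pos by (cases p) auto
    show ?thesis unfolding q prod.lessThan_Suc_shift A'_def by simp
  qed
  have "r * x = (\<Sum>k<(n::nat). of_int (c k) * (\<Prod>j<p. A' k j))" using x by (simp add: pr sum_distrib_left ac_simps)
  moreover have "\<forall>k<n. \<forall>j<p. A' k j \<in> Rg i" using x assms R0_mul by (auto simp: A'_def)
  ultimately show ?thesis by (rule pow_spanI)
qed

lemma pow_span_sub_mul: assumes i: "i \<in> {1..p-1}" shows "pow_span (Rg 1) p \<subseteq> mul_span (Rg i) (Rg (p - i))"
  unfolding pow_span_def
proof (safe)
  fix n c a assume h: "\<forall>k<n. \<forall>j<p. a k j \<in> Rg 1"
  have trm: "of_int (c k) * (\<Prod>j<p. a k j) \<in> mul_span (Rg i) (Rg (p - i))" if k: "k < n" for k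
  proof -
    have split: "(\<Prod>j<p. a k j) = (\<Prod>j<i. a k j) * (\<Prod>j\<in>{i..<p}. a k j)"
    proof -
      have "i \<le> p" using i by auto
      then show ?thesis using prod.atLeastLessThan_concat[of 0 i p "a k"] by (simp add: atLeast0LessThan)
    qed
    have a1: "(\<Prod>j<i. a k j) \<in> Rg ((card {..<i} * 1) mod p)" using h k i p_gt1 by (intro R_prod) auto
    have a2: "(\<Prod>j\<in>{i..<p}. a k j) \<in> Rg ((card {i..<p} * 1) mod p)" using h k i p_gt1 by (intro R_prod) auto
    have "i < p" using i p_gt1 by auto
    then have "(\<Prod>j<i. a k j) \<in> Rg i" "(\<Prod>j\<in>{i..<p}. a k j) \<in> Rg (p - i)" using a1 a2 i by auto
    then have "(of_int (c k) * (\<Prod>j<i. a k j)) * (\<Prod>j\<in>{i..<p}. a k j) \<in> mul_span (Rg i) (Rg (p - i))"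
      using R_int \<open>i < p\<close> by (intro mul_span_prod) auto
    then show ?thesis using split by (simp add: ac_simps)
  qed
  show "(\<Sum>k<n. of_int (c k) * (\<Prod>j<p. a k j)) \<in> mul_span (Rg i) (Rg (p - i))"
    using trm by (intro mul_span_sumf) auto
qed

end



context zpg begin

lemma fixedE:
  assumes "x \<in> fixed_ideal p Rg"
  obtains xf where "x = (\<Sum>i\<in>{1..p-1}. xf i)" "\<forall>i\<in>{1..p-1}. xf i \<in> mul_span (Rg i) (Rg (p - i))"
  using assms unfolding fixed_ideal_def by (elim CollectE exE conjE) (rule that, assumption+)

lemma fixedI:
  "x = (\<Sum>i\<in>{1..p-1}. xf i) \<Longrightarrow> \<forall>i\<in>{1..p-1}. xf i \<in> mul_span (Rg i) (Rg (p - i)) \<Longrightarrow> x \<in> fixed_ideal p Rg"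
  unfolding fixed_ideal_def by (rule CollectI, intro exI conjI)

lemma ms_R0: assumes "i \<in> {1..p-1}" shows "mul_span (Rg i) (Rg (p - i)) \<subseteq> Rg 0"
proof -
  have ip: "i < p" "p - i < p" using assms p_gt1 by auto
  have "(i + (p - i)) mod p = 0" using ip by simp
  then show ?thesis using mul_span_sub[OF ip] by simp
qed

lemma fixed_sub: "fixed_ideal p Rg \<subseteq> Rg 0"
proof
  fix x assume "x \<in> fixed_ideal p Rg"
  then obtain xf where x: "x = (\<Sum>i\<in>{1..p-1}. xf i)" "\<forall>i\<in>{1..p-1}. xf i \<in> mul_span (Rg i) (Rg (p - i))"
    by (rule fixedE)
  show "x \<in> Rg 0" unfolding x(1)
  proof (rule R_sum[OF p_pos])
    fix k assume "k \<in> {1..p-1}"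
    then show "xf k \<in> Rg 0" using x(2) ms_R0 by blast
  qed
qed

lemma ms1_fixed: "mul_span (Rg 1) (Rg (p - 1)) \<subseteq> fixed_ideal p Rg"
proof
  fix x assume x: "x \<in> mul_span (Rg 1) (Rg (p - 1))"
  define xf where "xf i = (if i = 1 then x else 0)" for i :: nat
  have "1 \<in> {1..p-1}" using p_gt1 by auto
  then have "(\<Sum>i\<in>{1..p-1}. xf i) = x" unfolding xf_def by simp
  moreover have "\<forall>i\<in>{1..p-1}. xf i \<in> mul_span (Rg i) (Rg (p - i))"
    using x mul_span_zero unfolding xf_def by auto
  ultimately show "x \<in> fixed_ideal p Rg" by (intro fixedI) auto
qed

lemma R0_pow: "z \<in> Rg 0 \<Longrightarrow> z ^ n \<in> Rg 0"
  using R_pow[of 0 z n] p_pos by simp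

lemma R0_nat: "(of_nat n :: 'r) \<in> Rg 0"
  using R_nat[of 0 1 n] one_R0 p_pos by simp

lemma rad_add:
  assumes i: "i < p" and z: "z \<in> Rg 0" and w: "w \<in> Rg 0"
    and zN: "z ^ N \<in> pow_span (Rg i) p" and wM: "w ^ M \<in> pow_span (Rg i) p"
  shows "(z + w) ^ (N + M) \<in> pow_span (Rg i) p"
proof -
  let ?n = "N + M"
  have "(z + w) ^ ?n = (\<Sum>k\<le>?n. of_nat (?n choose k) * z ^ k * w ^ (?n - k))"
    by (rule binomial_ring)
  also have "\<dots> \<in> pow_span (Rg i) p"
  proof (rule pow_span_sumf)
    fix k assume k: "k \<in> {..?n}"
    show "of_nat (?n choose k) * z ^ k * w ^ (?n - k) \<in> pow_span (Rg i) p"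
    proof (cases "N \<le> k")
      case True
      have zk: "z ^ k = z ^ (k - N) * z ^ N" using True by (metis le_add_diff_inverse2 power_add)
      have eq: "of_nat (?n choose k) * z ^ k * w ^ (?n - k) = (of_nat (?n choose k) * z ^ (k - N) * w ^ (?n - k)) * z ^ N"
        unfolding zk by (simp add: ac_simps)
      have "of_nat (?n choose k) * z ^ (k - N) * w ^ (?n - k) \<in> Rg 0"
        by (rule R0_mul2[OF R0_mul2[OF R0_nat R0_pow[OF z]] R0_pow[OF w]])
      then show ?thesis unfolding eq by (rule pow_span_R0[OF zN _ i])
    next
      case False
      then have "?n - k = (?n - k - M) + M" by simp
      then have eq: "of_nat (?n choose k) * z ^ k * w ^ (?n - k) = (of_nat (?n choose k) * z ^ k * w ^ (?n - k - M)) * w ^ M"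
        by (metis (no_types) mult.assoc power_add)
      have "of_nat (?n choose k) * z ^ k * w ^ (?n - k - M) \<in> Rg 0"
        by (rule R0_mul2[OF R0_mul2[OF R0_nat R0_pow[OF z]] R0_pow[OF w]])
      then show ?thesis unfolding eq by (rule pow_span_R0[OF wM _ i])
    qed
  qed
  finally show ?thesis .
qed

lemma term_rad:
  assumes i: "i \<in> {1..p-1}" and j: "j \<in> {1..p-1}" and a: "a \<in> Rg j" and b: "b \<in> Rg (p - j)"
    and s: "(s * j) mod p = i"
  shows "(of_int c * a * b) ^ (s * p) \<in> pow_span (Rg i) p"
proof -
  have jp: "j < p" "p - j < p" using j p_gt1 by auto
  have as: "a ^ s \<in> Rg i" using R_pow[OF jp(1) a, of s] s by simp
  have bs: "b ^ (s * p) \<in> Rg 0" using R_pow[OF jp(2) b, of "s * p"] by simp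
  have eq0: "(of_int c * a * b) ^ (s * p) = ((of_int c) ^ (s * p) * b ^ (s * p)) * a ^ (s * p)"
    by (simp only: power_mult_distrib ac_simps)
  have eq: "(of_int c * a * b) ^ (s * p) = ((of_int c) ^ (s * p) * b ^ (s * p)) * (a ^ s) ^ p"
    using eq0 power_mult[of a s p] by simp
  have r: "(of_int c) ^ (s * p) * b ^ (s * p) \<in> Rg 0" by (rule R0_mul2[OF R0_pow[OF R0_int] bs])
  have ap: "(a ^ s) ^ p \<in> pow_span (Rg i) p" using as by (rule pow_span_power)
  have ip: "i < p" using i p_gt1 by auto
  show ?thesis unfolding eq by (rule pow_span_R0[OF ap r ip])
qed

lemma B_to_C:
  assumes B: "fixed_ideal p Rg = Rg 0" and i: "i \<in> {1..p-1}"
  shows "pow_span (Rg i) p = Rg 0"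
proof -
  have ip: "i < p" using i p_gt1 by auto
  define Rad where "Rad = {z. z \<in> Rg 0 \<and> (\<exists>N. z ^ N \<in> pow_span (Rg i) p)}"
  have rad0: "0 \<in> Rad" unfolding Rad_def using R_zero p_pos pow_span_zero[of "Rg i" p]
    by (auto intro!: exI[of _ 1])
  have radadd: "z + w \<in> Rad" if zR: "z \<in> Rad" and wR: "w \<in> Rad" for z w
  proof -
    obtain N where N: "z \<in> Rg 0" "z ^ N \<in> pow_span (Rg i) p" using zR unfolding Rad_def by blast
    obtain M where M: "w \<in> Rg 0" "w ^ M \<in> pow_span (Rg i) p" using wR unfolding Rad_def by blast
    have "(z + w) ^ (N + M) \<in> pow_span (Rg i) p" by (rule rad_add[OF ip N(1) M(1) N(2) M(2)])
    moreover have "z + w \<in> Rg 0" using R_add[OF p_pos N(1) M(1)] .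
    ultimately show ?thesis unfolding Rad_def by blast
  qed
  have radsum: "sum f S \<in> Rad" if "\<And>s. s \<in> S \<Longrightarrow> f s \<in> Rad" for f and S :: "nat set"
    using that by (induction S rule: infinite_finite_induct) (auto simp: rad0 radadd)
  have radms: "mul_span (Rg j) (Rg (p - j)) \<subseteq> Rad" if j: "j \<in> {1..p-1}" for j
  proof
    fix x assume "x \<in> mul_span (Rg j) (Rg (p - j))"
    then obtain n c a b where x: "x = (\<Sum>k<(n::nat). of_int (c k) * a k * b k)" "\<forall>k<n. a k \<in> Rg j \<and> b k \<in> Rg (p - j)"
      by (rule mul_spanE)
    have jp: "0 < j" "j < p" using j p_gt1 by auto
    obtain s where s: "(s * j) mod p = i" using ex_mult_inv[OF prime jp ip] by blast
    show "x \<in> Rad" unfolding x(1)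
    proof (rule radsum)
      fix k assume k: "k \<in> {..<n}"
      have "a k * b k \<in> Rg ((j + (p - j)) mod p)" using x(2) k jp by (intro R_mul) auto
      then have "a k * b k \<in> Rg 0" using jp by simp
      then have "of_int (c k) * a k * b k \<in> Rg 0" using R0_int R0_mul2 by (simp add: mult.assoc)
      moreover have "(of_int (c k) * a k * b k) ^ (s * p) \<in> pow_span (Rg i) p"
        using term_rad[OF i j, of "a k" "b k" s "c k"] x(2) k s by auto
      ultimately show "of_int (c k) * a k * b k \<in> Rad" unfolding Rad_def by blast
    qed
  qed
  have "1 \<in> fixed_ideal p Rg" using B one_R0 by simp
  then obtain xf where x: "1 = (\<Sum>i\<in>{1..p-1}. xf i)" "\<forall>i\<in>{1..p-1}. xf i \<in> mul_span (Rg i) (Rg (p - i))"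
    by (rule fixedE)
  have "1 \<in> Rad" unfolding x(1) using x(2) radms by (intro radsum) blast
  then have one: "1 \<in> pow_span (Rg i) p" unfolding Rad_def by auto
  have "Rg 0 \<subseteq> pow_span (Rg i) p"
  proof
    fix r assume "r \<in> Rg 0"
    then have "r * 1 \<in> pow_span (Rg i) p" using pow_span_R0[OF one _ ip] by blast
    then show "r \<in> pow_span (Rg i) p" by simp
  qed
  then show ?thesis using pow_span_sub[OF ip] by blast
qed

lemma eq_BC: "fixed_ideal p Rg = Rg 0 \<longleftrightarrow> (\<forall>i\<in>{1..p-1}. pow_span (Rg i) p = Rg 0)"
proof
  assume "\<forall>i\<in>{1..p-1}. pow_span (Rg i) p = Rg 0"
  then have "pow_span (Rg 1) p = Rg 0" using p_gt1 by auto
  moreover have "pow_span (Rg 1) p \<subseteq> mul_span (Rg 1) (Rg (p - 1))" using pow_span_sub_mul[of 1] p_gt1 by simp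
  ultimately have "Rg 0 \<subseteq> fixed_ideal p Rg" using ms1_fixed by simp
  then show "fixed_ideal p Rg = Rg 0" using fixed_sub by simp
next
  assume "fixed_ideal p Rg = Rg 0"
  then show "\<forall>i\<in>{1..p-1}. pow_span (Rg i) p = Rg 0" using B_to_C by simp
qed

lemma D_to_B: assumes "pow_span (Rg 1) p = Rg 0" shows "fixed_ideal p Rg = Rg 0"
proof -
  have "pow_span (Rg 1) p \<subseteq> mul_span (Rg 1) (Rg (p - 1))" using pow_span_sub_mul[of 1] p_gt1 by simp
  then have "Rg 0 \<subseteq> fixed_ideal p Rg" using ms1_fixed assms by simp
  then show "fixed_ideal p Rg = Rg 0" using fixed_sub by simp
qed

lemma eq_CD: "(\<forall>i\<in>{1..p-1}. pow_span (Rg i) p = Rg 0) \<longleftrightarrow> pow_span (Rg 1) p = Rg 0"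
proof
  assume "\<forall>i\<in>{1..p-1}. pow_span (Rg i) p = Rg 0"
  moreover have "1 \<in> {1..p-1}" using p_gt1 by simp
  ultimately show "pow_span (Rg 1) p = Rg 0" by blast
next
  assume "pow_span (Rg 1) p = Rg 0"
  then have "fixed_ideal p Rg = Rg 0" by (rule D_to_B)
  then show "\<forall>i\<in>{1..p-1}. pow_span (Rg i) p = Rg 0" using B_to_C by simp
qed

lemma eq_DE: "pow_span (Rg 1) p = Rg 0 \<longleftrightarrow> (\<forall>i\<in>{1..p-1}. mul_span (Rg i) (Rg (p - i)) = Rg 0)"
proof
  assume D: "pow_span (Rg 1) p = Rg 0"
  show "\<forall>i\<in>{1..p-1}. mul_span (Rg i) (Rg (p - i)) = Rg 0"
  proof
    fix i assume i: "i \<in> {1..p-1}"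
    show "mul_span (Rg i) (Rg (p - i)) = Rg 0"
      using pow_span_sub_mul[OF i] ms_R0[OF i] D by simp
  qed
next
  assume E: "\<forall>i\<in>{1..p-1}. mul_span (Rg i) (Rg (p - i)) = Rg 0"
  then have "mul_span (Rg 1) (Rg (p - 1)) = Rg 0" using p_gt1 by auto
  then have "fixed_ideal p Rg = Rg 0" using ms1_fixed fixed_sub by simp
  then show "pow_span (Rg 1) p = Rg 0" using B_to_C[of 1] p_gt1 by simp
qed

end



lemma (in ring) union_chain_ideal:
  assumes ne: "C \<noteq> {}" and id: "\<And>J. J \<in> C \<Longrightarrow> ideal J R"
    and ch: "\<And>J K. J \<in> C \<Longrightarrow> K \<in> C \<Longrightarrow> J \<subseteq> K \<or> K \<subseteq> J"
  shows "ideal (\<Union>C) R"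
proof (rule idealI[OF ring_axioms])
  show "subgroup (\<Union>C) (add_monoid R)"
    apply (rule add.subgroupI)
    subgoal using id additive_subgroup.a_subset ideal.axioms(1) by fastforce
    subgoal using ne id additive_subgroup.zero_closed ideal.axioms(1) by fastforce
    subgoal for a
    proof -
      assume "a \<in> \<Union>C"
      then obtain J where J: "J \<in> C" "a \<in> J" by blast
      have "\<ominus> a \<in> J" using additive_subgroup.a_inv_closed[OF ideal.axioms(1)[OF id[OF J(1)]] J(2)] .
      then show ?thesis using J(1) by (auto simp: a_inv_def)
    qed
    subgoal for a b
    proof -
      assume "a \<in> \<Union>C" "b \<in> \<Union>C"
      then obtain J K where J: "J \<in> C" "a \<in> J" and K: "K \<in> C" "b \<in> K" by blast
      show ?thesis
      proof (cases "J \<subseteq> K")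
        case True
        then have "a \<oplus> b \<in> K" using additive_subgroup.a_closed[OF ideal.axioms(1)[OF id[OF K(1)]]] J K by blast
        then show ?thesis using K(1) by auto
      next
        case False
        then have "K \<subseteq> J" using ch J(1) K(1) by blast
        then have "a \<oplus> b \<in> J" using additive_subgroup.a_closed[OF ideal.axioms(1)[OF id[OF J(1)]]] J K by blast
        then show ?thesis using J(1) by auto
      qed
    qed
    done
next
  fix a x assume a: "a \<in> \<Union>C" and x: "x \<in> carrier R"
  then obtain J where J: "J \<in> C" "a \<in> J" by blast
  show "x \<otimes> a \<in> \<Union>C" using ideal.I_l_closed[OF id[OF J(1)] J(2) x] J(1) by blast
  show "a \<otimes> x \<in> \<Union>C" using ideal.I_r_closed[OF id[OF J(1)] J(2) x] J(1) by blast
qed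


lemma (in cring) ex_maximalideal:
  assumes one: "\<one> \<noteq> \<zero>"
  shows "\<exists>M. maximalideal M R"
proof -
  let ?S = "{J. ideal J R \<and> \<one> \<notin> J}"
  have ne: "?S \<noteq> {}" using zeroideal one by blast
  have "\<exists>M\<in>?S. \<forall>X\<in>?S. M \<subseteq> X \<longrightarrow> X = M"
  proof (rule subset_Zorn_nonempty[OF ne])
    fix C assume C: "C \<noteq> {}" "subset.chain ?S C"
    have "ideal (\<Union>C) R"
    proof (rule union_chain_ideal[OF C(1)])
      show "\<And>J. J \<in> C \<Longrightarrow> ideal J R" using C(2) unfolding pred_on.chain_def by auto
      show "\<And>J K. J \<in> C \<Longrightarrow> K \<in> C \<Longrightarrow> J \<subseteq> K \<or> K \<subseteq> J" using C(2) unfolding pred_on.chain_def by auto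
    qed
    moreover have "\<one> \<notin> \<Union>C" using C(2) unfolding pred_on.chain_def by auto
    ultimately show "\<Union>C \<in> ?S" by simp
  qed
  then obtain M where M: "ideal M R" "\<one> \<notin> M" and max: "\<And>X. X \<in> ?S \<Longrightarrow> M \<subseteq> X \<Longrightarrow> X = M"
    by blast
  have "maximalideal M R"
  proof (rule maximalidealI[OF M(1)])
    show "carrier R \<noteq> M" using M(2) by auto
    fix J assume J: "ideal J R" "M \<subseteq> J" "J \<subseteq> carrier R"
    show "J = M \<or> J = carrier R"
    proof (cases "\<one> \<in> J")
      case True then show ?thesis using ideal.one_imp_carrier[OF J(1)] by blast
    next
      case False then show ?thesis using max[of J] J by blast
    qed
  qed
  then show ?thesis by blast
qed

context zpg begin

abbreviation "S0 \<equiv> sub_ring (Rg 0)"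

lemma S0_simps [simp]: "carrier S0 = Rg 0" "mult S0 = (*)" "one S0 = 1" "zero S0 = 0" "add S0 = (+)"
  by (simp_all add: sub_ring_def)

lemma S0_cring: "cring S0"
proof (rule cringI)
  show "abelian_group S0"
  proof (rule abelian_groupI)
    fix x assume x: "x \<in> carrier S0"
    show "\<exists>y\<in>carrier S0. y \<oplus>\<^bsub>S0\<^esub> x = \<zero>\<^bsub>S0\<^esub>"
      using x R_neg[of 0 x] p_pos by (intro bexI[of _ "- x"]) auto
  qed (auto simp: R_add R_zero p_pos ac_simps)
  show "comm_monoid S0"
    by (rule comm_monoidI) (auto simp: R0_mul2 one_R0 ac_simps)
qed (simp add: distrib_right)

interpretation S0: cring S0 by (rule S0_cring)

lemma S0_minus: "x \<in> Rg 0 \<Longrightarrow> \<ominus>\<^bsub>S0\<^esub> x = - x"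
  using S0.add.inv_equality[of "- x" x] R_neg[of 0 x] p_pos by (simp add: a_inv_def)

lemma fixed_zero: "0 \<in> fixed_ideal p Rg"
  by (rule fixedI[where xf="\<lambda>_. 0"]) (auto simp: mul_span_zero)

lemma fixed_add: assumes "x \<in> fixed_ideal p Rg" "y \<in> fixed_ideal p Rg" shows "x + y \<in> fixed_ideal p Rg"
proof -
  obtain xf where x: "x = (\<Sum>i\<in>{1..p-1}. xf i)" "\<forall>i\<in>{1..p-1}. xf i \<in> mul_span (Rg i) (Rg (p - i))"
    using assms(1) by (rule fixedE)
  obtain yf where y: "y = (\<Sum>i\<in>{1..p-1}. yf i)" "\<forall>i\<in>{1..p-1}. yf i \<in> mul_span (Rg i) (Rg (p - i))"
    using assms(2) by (rule fixedE)
  show ?thesis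
    by (rule fixedI[where xf="\<lambda>i. xf i + yf i"]) (use x y in \<open>auto simp: sum.distrib mul_span_add\<close>)
qed

lemma fixed_neg: assumes "x \<in> fixed_ideal p Rg" shows "- x \<in> fixed_ideal p Rg"
proof -
  obtain xf where x: "x = (\<Sum>i\<in>{1..p-1}. xf i)" "\<forall>i\<in>{1..p-1}. xf i \<in> mul_span (Rg i) (Rg (p - i))"
    using assms(1) by (rule fixedE)
  show ?thesis
    by (rule fixedI[where xf="\<lambda>i. - xf i"]) (use x in \<open>auto simp: sum_negf mul_span_neg\<close>)
qed

lemma fixed_mul: assumes "x \<in> fixed_ideal p Rg" "r \<in> Rg 0" shows "r * x \<in> fixed_ideal p Rg"
proof -
  obtain xf where x: "x = (\<Sum>i\<in>{1..p-1}. xf i)" "\<forall>i\<in>{1..p-1}. xf i \<in> mul_span (Rg i) (Rg (p - i))"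
    using assms(1) by (rule fixedE)
  have "\<forall>i\<in>{1..p-1}. r * xf i \<in> mul_span (Rg i) (Rg (p - i))"
  proof
    fix i assume i: "i \<in> {1..p-1}"
    then have "i < p" using p_gt1 by auto
    then show "r * xf i \<in> mul_span (Rg i) (Rg (p - i))" using x(2) i assms(2) mul_span_R0 by blast
  qed
  then show ?thesis
    by (intro fixedI[where xf="\<lambda>i. r * xf i"]) (use x in \<open>auto simp: sum_distrib_left\<close>)
qed

lemma fixed_ideal_ideal: "ideal (fixed_ideal p Rg) S0"
proof (rule idealI[OF S0.ring_axioms])
  show "subgroup (fixed_ideal p Rg) (add_monoid S0)"
    apply (rule S0.add.subgroupI)
    subgoal using fixed_sub by simp
    subgoal using fixed_zero by blast
    subgoal for a using fixed_neg[of a] fixed_sub S0_minus[of a] by (auto simp: a_inv_def[symmetric])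
    subgoal for a b using fixed_add by simp
    done
  fix a x assume "a \<in> fixed_ideal p Rg" "x \<in> carrier S0"
  then show "x \<otimes>\<^bsub>S0\<^esub> a \<in> fixed_ideal p Rg" "a \<otimes>\<^bsub>S0\<^esub> x \<in> fixed_ideal p Rg"
    using fixed_mul by (auto simp: mult.commute)
qed

lemma eq_AB: "Spec (S0 Quot fixed_ideal p Rg) = {} \<longleftrightarrow> fixed_ideal p Rg = Rg 0"
proof -
  let ?I = "fixed_ideal p Rg"
  interpret I: ideal ?I S0 by (rule fixed_ideal_ideal)
  have Qc: "cring (S0 Quot ?I)" by (rule I.quotient_is_cring[OF S0_cring])
  interpret Q: cring "S0 Quot ?I" by (rule Qc)
  have zQ: "\<zero>\<^bsub>S0 Quot ?I\<^esub> = ?I" and oQ: "\<one>\<^bsub>S0 Quot ?I\<^esub> = ?I +>\<^bsub>S0\<^esub> 1"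
    by (simp_all add: FactRing_def)
  show ?thesis
  proof
    assume "Spec (S0 Quot ?I) = {}"
    show "?I = Rg 0"
    proof (rule ccontr)
      assume ne: "?I \<noteq> Rg 0"
      have n1: "1 \<notin> ?I"
      proof
        assume "1 \<in> ?I"
        then have "?I = carrier S0" using I.one_imp_carrier by simp
        then show False using ne by simp
      qed
      have "\<one>\<^bsub>S0 Quot ?I\<^esub> \<noteq> \<zero>\<^bsub>S0 Quot ?I\<^esub>"
      proof
        assume "\<one>\<^bsub>S0 Quot ?I\<^esub> = \<zero>\<^bsub>S0 Quot ?I\<^esub>"
        then have "?I +>\<^bsub>S0\<^esub> 1 = ?I" using zQ oQ by simp
        moreover have "1 \<in> ?I +>\<^bsub>S0\<^esub> 1" using I.a_rcos_self[of 1] one_R0 by simp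
        ultimately show False using n1 by simp
      qed
      then obtain M where "maximalideal M (S0 Quot ?I)" using Q.ex_maximalideal by blast
      then have "primeideal M (S0 Quot ?I)" by (rule Q.maximalideal_prime)
      then show False using \<open>Spec (S0 Quot ?I) = {}\<close> unfolding Spec_def by blast
    qed
  next
    assume eq: "?I = Rg 0"
    show "Spec (S0 Quot ?I) = {}"
    proof (rule ccontr)
      assume "Spec (S0 Quot ?I) \<noteq> {}"
      then obtain P where P: "primeideal P (S0 Quot ?I)" unfolding Spec_def by blast
      interpret P: primeideal P "S0 Quot ?I" by (rule P)
      have "?I +>\<^bsub>S0\<^esub> 1 = ?I" using I.a_rcos_const[of 1] one_R0 eq by simp
      then have "\<one>\<^bsub>S0 Quot ?I\<^esub> = \<zero>\<^bsub>S0 Quot ?I\<^esub>" using zQ oQ by simp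
      then have "\<one>\<^bsub>S0 Quot ?I\<^esub> \<in> P" using P.zero_closed by simp
      then have "P = carrier (S0 Quot ?I)" by (rule P.one_imp_carrier)
      then show False using P.I_notcarr by simp
    qed
  qed
qed

end



definition flin :: "('k \<Rightarrow> 'r::comm_ring_1) \<Rightarrow> ('k \<Rightarrow>\<^sub>0 int) \<Rightarrow> 'r" where
  "flin g x = (\<Sum>\<kappa>\<in>Poly_Mapping.keys x. of_int (Poly_Mapping.lookup x \<kappa>) * g \<kappa>)"

lemma flin_superset:
  assumes "finite S" "Poly_Mapping.keys x \<subseteq> S"
  shows "flin g x = (\<Sum>\<kappa>\<in>S. of_int (Poly_Mapping.lookup x \<kappa>) * g \<kappa>)"
  unfolding flin_def
  by (rule sum.mono_neutral_left) (use assms in \<open>auto simp: in_keys_iff\<close>)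

lemma flin_0 [simp]: "flin g 0 = 0" by (simp add: flin_def)

lemma flin_add: "flin g (x + y) = flin g x + flin g y"
proof -
  let ?S = "Poly_Mapping.keys x \<union> Poly_Mapping.keys y"
  have f: "finite ?S" by simp
  have "flin g (x + y) = (\<Sum>\<kappa>\<in>?S. of_int (Poly_Mapping.lookup (x + y) \<kappa>) * g \<kappa>)"
    using keys_add[of x y] by (intro flin_superset) auto
  also have "\<dots> = (\<Sum>\<kappa>\<in>?S. of_int (Poly_Mapping.lookup x \<kappa>) * g \<kappa>) + (\<Sum>\<kappa>\<in>?S. of_int (Poly_Mapping.lookup y \<kappa>) * g \<kappa>)"
    by (simp add: lookup_add distrib_right sum.distrib)
  also have "\<dots> = flin g x + flin g y"
    by (subst (1 2) flin_superset[of ?S]) auto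
  finally show ?thesis .
qed

lemma flin_neg: "flin g (- x) = - flin g x"
  by (simp add: flin_def sum_negf)

lemma flin_diff: "flin g (x - y) = flin g x - flin g y"
  using flin_add[of g x "- y"] flin_neg[of g y] by simp

lemma flin_single [simp]: "flin g (Poly_Mapping.single \<kappa> n) = of_int n * g \<kappa>"
  by (simp add: flin_def)

lemma flin_sum: "flin g (\<Sum>i\<in>I. f i) = (\<Sum>i\<in>I. flin g (f i))"
  by (induction I rule: infinite_finite_induct) (auto simp: flin_add)

lemma flin_cong: "(\<And>\<kappa>. \<kappa> \<in> Poly_Mapping.keys x \<Longrightarrow> g \<kappa> = h \<kappa>) \<Longrightarrow> flin g x = flin h x"
  by (simp add: flin_def)

lemma mu_flin: "(\<lambda>x. \<Sum>(a, b)\<in>Poly_Mapping.keys x. of_int (Poly_Mapping.lookup x (a, b)) * a * b) = flin (\<lambda>(a, b). a * b)"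
proof
  fix x :: "'r::comm_ring_1 \<times> 'r \<Rightarrow>\<^sub>0 int"
  show "(\<Sum>(a, b)\<in>Poly_Mapping.keys x. of_int (Poly_Mapping.lookup x (a, b)) * a * b) = flin (\<lambda>(a, b). a * b) x"
    unfolding flin_def by (rule sum.cong) (auto simp: mult.assoc)
qed

lemma mmi_iff: "mult_map_iso A M N P \<longleftrightarrow>
   (flin (\<lambda>(a, b). a * b) ` formal_sums M N = P \<and>
    (\<forall>x\<in>formal_sums M N. flin (\<lambda>(a, b). a * b) x = 0 \<longleftrightarrow> x \<in> tensor_rels A M N))"
  unfolding mult_map_iso_def Let_def mu_flin ..

lemma tr_diff: "x \<in> tensor_rels A M N \<Longrightarrow> y \<in> tensor_rels A M N \<Longrightarrow> x - y \<in> tensor_rels A M N"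
  using tensor_rels.add[OF _ tensor_rels.neg] by (metis diff_conv_add_uminus)

lemma tr_sum: "(\<And>i. i \<in> I \<Longrightarrow> f i \<in> tensor_rels A M N) \<Longrightarrow> sum f I \<in> tensor_rels A M N"
  by (induction I rule: infinite_finite_induct) (auto intro: tensor_rels.zero tensor_rels.add)

lemma tr_trans: "x - y \<in> tensor_rels A M N \<Longrightarrow> y - z \<in> tensor_rels A M N \<Longrightarrow> x - z \<in> tensor_rels A M N"
  using tensor_rels.add[of "x - y" A M N "y - z"] by simp

lemma tr_sum_diff: "(\<And>i. i \<in> I \<Longrightarrow> f i - g i \<in> tensor_rels A M N) \<Longrightarrow> sum f I - sum g I \<in> tensor_rels A M N"
  using tr_sum[of I "\<lambda>i. f i - g i" A M N] by (simp add: sum_subtractf)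

lemma tr_mono: "x \<in> tensor_rels A M N \<Longrightarrow> M \<subseteq> M' \<Longrightarrow> N \<subseteq> N' \<Longrightarrow> x \<in> tensor_rels A M' N'"
proof (induction rule: tensor_rels.induct)
  case zero show ?case by (rule tensor_rels.zero)
next
  case (add x y) then show ?case by (blast intro: tensor_rels.add)
next
  case (neg x) then show ?case by (blast intro: tensor_rels.neg)
next
  case (lin1 a a' b) then show ?case by (blast intro: tensor_rels.lin1)
next
  case (lin2 a b b') then show ?case by (blast intro: tensor_rels.lin2)
next
  case (bal r a b) then show ?case by (blast intro: tensor_rels.bal)
qed

lemma tr_vanish:
  assumes "x \<in> tensor_rels A M N"
    and l1: "\<And>a a' b. a \<in> M \<Longrightarrow> a' \<in> M \<Longrightarrow> b \<in> N \<Longrightarrow> g (a + a', b) = g (a, b) + g (a', b)"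
    and l2: "\<And>a b b'. a \<in> M \<Longrightarrow> b \<in> N \<Longrightarrow> b' \<in> N \<Longrightarrow> g (a, b + b') = g (a, b) + g (a, b')"
    and bl: "\<And>r a b. r \<in> A \<Longrightarrow> a \<in> M \<Longrightarrow> b \<in> N \<Longrightarrow> g (r * a, b) = g (a, r * b)"
  shows "flin g x = 0"
  using assms(1)
proof (induction rule: tensor_rels.induct)
  case (add x y) then show ?case by (simp add: flin_add)
next
  case (neg x) then show ?case by (simp add: flin_neg)
next
  case (lin1 a a' b) then show ?case by (simp add: flin_diff l1)
next
  case (lin2 a b b') then show ?case by (simp add: flin_diff l2)
next
  case (bal r a b) then show ?case by (simp add: flin_diff bl)
qed simp

lemma tr_extend:
  assumes "x \<in> tensor_rels A M N"
    and l1: "\<And>a a' b. a \<in> M \<Longrightarrow> a' \<in> M \<Longrightarrow> b \<in> N \<Longrightarrow> F (a + a', b) - F (a, b) - F (a', b) \<in> tensor_rels A' M' N'"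
    and l2: "\<And>a b b'. a \<in> M \<Longrightarrow> b \<in> N \<Longrightarrow> b' \<in> N \<Longrightarrow> F (a, b + b') - F (a, b) - F (a, b') \<in> tensor_rels A' M' N'"
    and bl: "\<And>r a b. r \<in> A \<Longrightarrow> a \<in> M \<Longrightarrow> b \<in> N \<Longrightarrow> F (r * a, b) - F (a, r * b) \<in> tensor_rels A' M' N'"
  shows "frag_extend F x \<in> tensor_rels A' M' N'"
  using assms(1)
proof (induction rule: tensor_rels.induct)
  case zero then show ?case by (simp add: tensor_rels.zero)
next
  case (add x y) then show ?case by (simp add: frag_extend_add tensor_rels.add)
next
  case (neg x) then show ?case by (simp add: frag_extend_minus tensor_rels.neg)
next
  case (lin1 a a' b) then show ?case using l1 by (simp add: frag_extend_diff)
next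
  case (lin2 a b b') then show ?case using l2 by (simp add: frag_extend_diff)
next
  case (bal r a b) then show ?case using bl by (simp add: frag_extend_diff)
qed

lemma tr_single_zero_left: "0 \<in> M \<Longrightarrow> b \<in> N \<Longrightarrow> frag_of (0, b) \<in> tensor_rels A M N"
  using tensor_rels.neg[OF tensor_rels.lin1[of 0 M 0 b N A]] by simp

lemma tr_single_zero_right: "a \<in> M \<Longrightarrow> 0 \<in> N \<Longrightarrow> frag_of (a, 0) \<in> tensor_rels A M N"
  using tensor_rels.neg[OF tensor_rels.lin2[of a M 0 N 0 A]] by simp

lemma tr_sum_left:
  assumes "0 \<in> M" "\<And>x y. x \<in> M \<Longrightarrow> y \<in> M \<Longrightarrow> x + y \<in> M" "\<And>t. t < (n::nat) \<Longrightarrow> a t \<in> M" "b \<in> N"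
  shows "frag_of (\<Sum>t<n. a t, b) - (\<Sum>t<n. frag_of (a t, b)) \<in> tensor_rels A M N"
  using assms(3)
proof (induction n)
  case 0 then show ?case using tr_single_zero_left[OF assms(1,4)] by simp
next
  case (Suc n)
  have s: "(\<Sum>t<n. a t) \<in> M"
    using Suc.prems by (induction n) (auto intro: assms(1,2))
  have "frag_of ((\<Sum>t<n. a t) + a n, b) - frag_of (\<Sum>t<n. a t, b) - frag_of (a n, b) \<in> tensor_rels A M N"
    by (rule tensor_rels.lin1[OF s Suc.prems assms(4)]) simp
  moreover have "frag_of (\<Sum>t<n. a t, b) - (\<Sum>t<n. frag_of (a t, b)) \<in> tensor_rels A M N"
    using Suc by simp
  ultimately have "(frag_of ((\<Sum>t<n. a t) + a n, b) - frag_of (\<Sum>t<n. a t, b) - frag_of (a n, b))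
     + (frag_of (\<Sum>t<n. a t, b) - (\<Sum>t<n. frag_of (a t, b))) \<in> tensor_rels A M N"
    by (rule tensor_rels.add)
  then show ?case by (simp add: algebra_simps)
qed




lemma modid1: "k < p \<Longrightarrow> l < p \<Longrightarrow> ((p - k) mod p + (k + l) mod p) mod p = (l::nat)"
proof -
  assume k: "k < p" and l: "l < p"
  have "((p - k) mod p + (k + l) mod p) mod p = ((p - k) + (k + l)) mod p" by (simp add: mod_add_eq)
  also have "(p - k) + (k + l) = l + p" using k by simp
  finally show ?thesis using l by simp
qed

lemma modid2: "k < p \<Longrightarrow> ((p - k) mod p + k) mod p = (0::nat)"
proof -
  assume k: "k < p"
  have "((p - k) mod p + k) mod p = ((p - k) + k) mod p" by (simp add: mod_add_left_eq)
  also have "(p - k) + k = p" using k by simp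
  finally show ?thesis by simp
qed

lemma drc: "(X::'a::ab_group_add) - Y - Z = X - Z - Y" by (simp add: algebra_simps)

context zpg begin

abbreviation mm :: "'r \<times> 'r \<Rightarrow> 'r" where "mm \<equiv> (\<lambda>(a, b). a * b)"

lemma flin_mm_of [simp]: "flin mm (frag_of (a, b)) = a * b" by simp

lemma mu_in:
  assumes "Poly_Mapping.keys x \<subseteq> Rg k \<times> Rg l" "k < p" "l < p"
  shows "flin mm x \<in> Rg ((k + l) mod p)"
  using assms(1)
proof (induction x rule: frag_induction)
  case zero then show ?case using R_zero p_pos by simp
next
  case (one x) then show ?case using R_mul assms(2,3) by (cases x) auto
next
  case (diff a b) then show ?case using R_diff p_pos by (simp add: flin_diff)
qed

lemma mu_in_ms:
  assumes "Poly_Mapping.keys x \<subseteq> A \<times> B"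
  shows "flin mm x \<in> mul_span A B"
  using assms
proof (induction x rule: frag_induction)
  case zero then show ?case using mul_span_zero by simp
next
  case (one x) then show ?case using mul_span_prod by (cases x) auto
next
  case (diff a b) then show ?case using mul_span_add[OF diff(1) mul_span_neg[OF diff(2)]] by (simp add: flin_diff)
qed

lemma unit_dec:
  assumes E: "\<forall>i\<in>{1..p-1}. mul_span (Rg i) (Rg (p - i)) = Rg 0" and k: "k < p"
  shows "\<exists>n cs us vs. 1 = (\<Sum>t<(n::nat). of_int (cs t) * us t * vs t) \<and>
     (\<forall>t<n. us t \<in> Rg k \<and> vs t \<in> Rg ((p - k) mod p))"
proof (cases "k = 0")
  case True
  show ?thesis
    by (rule exI[of _ 1], rule exI[of _ "\<lambda>_. 1"], rule exI[of _ "\<lambda>_. 1"], rule exI[of _ "\<lambda>_. 1"])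
      (use True one_R0 in auto)
next
  case False
  then have "k \<in> {1..p-1}" using k by auto
  then have "1 \<in> mul_span (Rg k) (Rg (p - k))" using E one_R0 by auto
  then obtain n cs us vs where "1 = (\<Sum>t<(n::nat). of_int (cs t) * us t * vs t)"
     "\<forall>t<n. us t \<in> Rg k \<and> vs t \<in> Rg (p - k)" by (rule mul_spanE)
  moreover have "(p - k) mod p = p - k" using False k by simp
  ultimately show ?thesis by auto
qed

lemma E_to_F_surj:
  assumes E: "\<forall>i\<in>{1..p-1}. mul_span (Rg i) (Rg (p - i)) = Rg 0" and k: "k < p" and l: "l < p"
  shows "flin mm ` formal_sums (Rg k) (Rg l) = Rg ((k + l) mod p)"
proof
  show "flin mm ` formal_sums (Rg k) (Rg l) \<subseteq> Rg ((k + l) mod p)"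
    using mu_in k l by (auto simp: formal_sums_def)
  show "Rg ((k + l) mod p) \<subseteq> flin mm ` formal_sums (Rg k) (Rg l)"
  proof
    fix z assume z: "z \<in> Rg ((k + l) mod p)"
    obtain n cs us vs where u: "1 = (\<Sum>t<(n::nat). of_int (cs t) * us t * vs t)"
      "\<forall>t<n. us t \<in> Rg k \<and> vs t \<in> Rg ((p - k) mod p)" using unit_dec[OF E k] by blast
    define x where "x = (\<Sum>t<n. frag_of (us t, of_int (cs t) * vs t * z))"
    have w: "of_int (cs t) * vs t * z \<in> Rg l" if "t < n" for t
    proof -
      have "vs t * z \<in> Rg (((p - k) mod p + (k + l) mod p) mod p)"
        using u(2) that z p_pos by (intro R_mul) auto
      then have "vs t * z \<in> Rg l" using modid1[OF k l] by simp
      then show ?thesis using R_int l by (simp add: mult.assoc)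
    qed
    have "Poly_Mapping.keys x \<subseteq> Rg k \<times> Rg l"
      unfolding x_def using keys_sum[of "\<lambda>t. frag_of (us t, of_int (cs t) * vs t * z)" "{..<n}"] u(2) w
      by auto
    then have "x \<in> formal_sums (Rg k) (Rg l)" by (simp add: formal_sums_def)
    moreover have "flin mm x = z"
    proof -
      have "flin mm x = (\<Sum>t<n. us t * (of_int (cs t) * vs t * z))" unfolding x_def by (simp add: flin_sum)
      also have "\<dots> = (\<Sum>t<n. of_int (cs t) * us t * vs t) * z" unfolding sum_distrib_right by (simp add: ac_simps)
      also have "\<dots> = z" using u(1) by simp
      finally show ?thesis .
    qed
    ultimately show "z \<in> flin mm ` formal_sums (Rg k) (Rg l)" by force
  qed
qed

lemma E_to_F_inj:
  assumes E: "\<forall>i\<in>{1..p-1}. mul_span (Rg i) (Rg (p - i)) = Rg 0" and k: "k < p" and l: "l < p"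
    and x: "x \<in> formal_sums (Rg k) (Rg l)" and x0: "flin mm x = 0"
  shows "x \<in> tensor_rels (Rg 0) (Rg k) (Rg l)"
proof -
  let ?T = "tensor_rels (Rg 0) (Rg k) (Rg l)"
  let ?m = "(k + l) mod p"
  have m: "?m < p" using p_pos by simp
  obtain n cs us vs where u: "1 = (\<Sum>t<(n::nat). of_int (cs t) * us t * vs t)"
    "\<forall>t<n. us t \<in> Rg k \<and> vs t \<in> Rg ((p - k) mod p)" using unit_dec[OF E k] by blast
  define Ef where "Ef w = (\<Sum>t<n. frag_of (us t, of_int (cs t) * vs t * w))" for w
  have w: "of_int (cs t) * vs t * w \<in> Rg l" if "t < n" "w \<in> Rg ?m" for t w
  proof -
    have "vs t * w \<in> Rg (((p - k) mod p + (k + l) mod p) mod p)"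
      using u(2) that p_pos by (intro R_mul) auto
    then have "vs t * w \<in> Rg l" using modid1[OF k l] by simp
    then show ?thesis using R_int l by (simp add: mult.assoc)
  qed
  have Ediff: "Ef w - Ef w' - Ef (w - w') \<in> ?T" if ww: "w \<in> Rg ?m" "w' \<in> Rg ?m" for w w'
  proof -
    have "Ef w - Ef w' - Ef (w - w') = (\<Sum>t<n. frag_of (us t, of_int (cs t) * vs t * w)
       - frag_of (us t, of_int (cs t) * vs t * w') - frag_of (us t, of_int (cs t) * vs t * (w - w')))"
      unfolding Ef_def by (simp only: sum_subtractf)
    also have "\<dots> \<in> ?T"
    proof (rule tr_sum)
      fix t assume t: "t \<in> {..<n}"
      define b where "b = of_int (cs t) * vs t * w - of_int (cs t) * vs t * w'"
      define b' where "b' = of_int (cs t) * vs t * w'"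
      have e1: "of_int (cs t) * vs t * w = b + b'" unfolding b_def b'_def by simp
      have e2: "of_int (cs t) * vs t * (w - w') = b" unfolding b_def by (simp add: right_diff_distrib)
      have bN: "b \<in> Rg l" "b' \<in> Rg l" unfolding b_def b'_def using t w[of t w] w[of t w'] ww R_diff[OF l] by auto
      have "frag_of (us t, b + b') - frag_of (us t, b) - frag_of (us t, b') \<in> ?T"
        using t u(2) bN by (intro tensor_rels.lin2) auto
      then show "frag_of (us t, of_int (cs t) * vs t * w)
       - frag_of (us t, of_int (cs t) * vs t * w') - frag_of (us t, of_int (cs t) * vs t * (w - w')) \<in> ?T"
        unfolding e1 e2 b'_def[symmetric] by (simp only: drc[of "frag_of (us t, b + b')" "frag_of (us t, b')"])
    qed
    finally show ?thesis .
  qed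
  have E0: "Ef 0 \<in> ?T"
    unfolding Ef_def using u(2) R_zero l by (intro tr_sum) (auto intro: tr_single_zero_right)
  have Eone: "frag_of (a, b) - Ef (a * b) \<in> ?T" if ab: "a \<in> Rg k" "b \<in> Rg l" for a b
  proof -
    define r where "r t = of_int (cs t) * vs t * a" for t
    have r0: "r t \<in> Rg 0" if "t < n" for t
    proof -
      have "vs t * a \<in> Rg (((p - k) mod p + k) mod p)" using u(2) that ab p_pos k by (intro R_mul) auto
      then have "vs t * a \<in> Rg 0" using modid2[OF k] by simp
      then show ?thesis unfolding r_def using R0_int R0_mul2 by (simp add: mult.assoc)
    qed
    have ru: "r t * us t \<in> Rg k" if "t < n" for t using r0[OF that] u(2) that k R0_mul by blast
    have asum: "a = (\<Sum>t<n. r t * us t)"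
    proof -
      have "a = (\<Sum>t<n. of_int (cs t) * us t * vs t) * a" using u(1) by simp
      also have "\<dots> = (\<Sum>t<n. r t * us t)" unfolding r_def sum_distrib_right by (simp add: ac_simps)
      finally show ?thesis .
    qed
    have s1: "frag_of (a, b) - (\<Sum>t<n. frag_of (r t * us t, b)) \<in> ?T"
      unfolding asum by (rule tr_sum_left) (use R_zero R_add k ru ab in auto)
    have s2: "(\<Sum>t<n. frag_of (r t * us t, b)) - (\<Sum>t<n. frag_of (us t, r t * b)) \<in> ?T"
      by (rule tr_sum_diff) (use r0 u(2) ab in \<open>auto intro: tensor_rels.bal\<close>)
    have "(\<Sum>t<n. frag_of (us t, r t * b)) = Ef (a * b)" unfolding Ef_def r_def by (simp add: ac_simps)
    then show ?thesis using tr_trans[OF s1 s2] by simp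
  qed
  have P: "flin mm y \<in> Rg ?m \<and> y - Ef (flin mm y) \<in> ?T" if "Poly_Mapping.keys y \<subseteq> Rg k \<times> Rg l" for y
    using that
  proof (induction y rule: frag_induction)
    case zero
    have "0 - Ef (flin mm 0) = - Ef 0" by simp
    then show ?case using R_zero[OF m] tensor_rels.neg[OF E0] by simp
  next
    case (one y)
    then obtain a b where y: "y = (a, b)" "a \<in> Rg k" "b \<in> Rg l" by auto
    then show ?case using Eone[of a b] R_mul[of k l a b] k l by simp
  next
    case (diff y1 y2)
    let ?f1 = "flin mm y1" and ?f2 = "flin mm y2"
    have i1: "?f1 - ?f2 \<in> Rg ?m" using diff R_diff[OF m] by blast
    have "(y1 - y2) - Ef (?f1 - ?f2) = (y1 - Ef ?f1) - (y2 - Ef ?f2) + (Ef ?f1 - Ef ?f2 - Ef (?f1 - ?f2))"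
      by (simp add: algebra_simps)
    also have "\<dots> \<in> ?T"
      by (rule tensor_rels.add[OF tr_diff Ediff]) (use diff in auto)
    finally show ?case using i1 by (simp add: flin_diff)
  qed
  have "x - Ef 0 \<in> ?T" using P[of x] x x0 by (simp add: formal_sums_def)
  then have "(x - Ef 0) + Ef 0 \<in> ?T" using E0 by (rule tensor_rels.add)
  then show ?thesis by simp
qed

lemma E_to_F:
  assumes E: "\<forall>i\<in>{1..p-1}. mul_span (Rg i) (Rg (p - i)) = Rg 0"
  shows "\<forall>k<p. \<forall>l<p. mult_map_iso (Rg 0) (Rg k) (Rg l) (Rg ((k + l) mod p))"
proof (intro allI impI)
  fix k l assume k: "k < p" and l: "l < p"
  show "mult_map_iso (Rg 0) (Rg k) (Rg l) (Rg ((k + l) mod p))"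
    unfolding mmi_iff
  proof (intro conjI ballI iffI)
    show "flin mm ` formal_sums (Rg k) (Rg l) = Rg ((k + l) mod p)" by (rule E_to_F_surj[OF E k l])
  next
    fix x assume "x \<in> formal_sums (Rg k) (Rg l)" "flin mm x = 0"
    then show "x \<in> tensor_rels (Rg 0) (Rg k) (Rg l)" by (rule E_to_F_inj[OF E k l])
  next
    fix x assume "x \<in> tensor_rels (Rg 0) (Rg k) (Rg l)"
    then show "flin mm x = 0" by (rule tr_vanish) (simp_all add: algebra_simps)
  qed
qed

lemma F_to_E:
  assumes F: "\<forall>k<p. \<forall>l<p. mult_map_iso (Rg 0) (Rg k) (Rg l) (Rg ((k + l) mod p))"
  shows "\<forall>i\<in>{1..p-1}. mul_span (Rg i) (Rg (p - i)) = Rg 0"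
proof
  fix i assume i: "i \<in> {1..p-1}"
  have ip: "i < p" "p - i < p" using i p_gt1 by auto
  have "(i + (p - i)) mod p = 0" using ip by simp
  moreover have "mult_map_iso (Rg 0) (Rg i) (Rg (p - i)) (Rg ((i + (p - i)) mod p))" using F ip by blast
  ultimately have "flin mm ` formal_sums (Rg i) (Rg (p - i)) = Rg 0"
    unfolding mmi_iff by simp
  have "Rg 0 \<subseteq> mul_span (Rg i) (Rg (p - i))"
  proof
    fix z assume "z \<in> Rg 0"
    then obtain y where y: "y \<in> formal_sums (Rg i) (Rg (p - i))" "z = flin mm y"
      using \<open>flin mm ` formal_sums (Rg i) (Rg (p - i)) = Rg 0\<close> by blast
    show "z \<in> mul_span (Rg i) (Rg (p - i))" using y mu_in_ms by (simp add: formal_sums_def)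
  qed
  then show "mul_span (Rg i) (Rg (p - i)) = Rg 0" using ms_R0[OF i] by blast
qed

lemma eq_EF: "(\<forall>i\<in>{1..p-1}. mul_span (Rg i) (Rg (p - i)) = Rg 0) \<longleftrightarrow>
   (\<forall>k<p. \<forall>l<p. mult_map_iso (Rg 0) (Rg k) (Rg l) (Rg ((k + l) mod p)))"
  using E_to_F F_to_E by blast

end



lemma modid3: "k < p \<Longrightarrow> l < p \<Longrightarrow> ((k + l) mod p + p - k) mod p = (l::nat)"
proof -
  assume k: "k < p" and l: "l < p"
  have "(k + l) mod p + p - k = (k + l) mod p + (p - k)" using k by simp
  then have "((k + l) mod p + p - k) mod p = ((k + l) mod p + (p - k)) mod p" by simp
  also have "\<dots> = (k + l + (p - k)) mod p" by (simp add: mod_add_left_eq)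
  also have "k + l + (p - k) = l + p" using k by simp
  finally show ?thesis using l by simp
qed

lemma tr_sum_right:
  assumes "0 \<in> N" "\<And>x y. x \<in> N \<Longrightarrow> y \<in> N \<Longrightarrow> x + y \<in> N" "\<And>t. t < (n::nat) \<Longrightarrow> b t \<in> N" "a \<in> M"
  shows "frag_of (a, \<Sum>t<n. b t) - (\<Sum>t<n. frag_of (a, b t)) \<in> tensor_rels A M N"
  using assms(3)
proof (induction n)
  case 0 then show ?case using tr_single_zero_right[OF assms(4,1)] by simp
next
  case (Suc n)
  have s: "(\<Sum>t<n. b t) \<in> N"
    using Suc.prems by (induction n) (auto intro: assms(1,2))
  have "frag_of (a, (\<Sum>t<n. b t) + b n) - frag_of (a, \<Sum>t<n. b t) - frag_of (a, b n) \<in> tensor_rels A M N"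
    by (rule tensor_rels.lin2[OF assms(4) s Suc.prems]) simp
  moreover have "frag_of (a, \<Sum>t<n. b t) - (\<Sum>t<n. frag_of (a, b t)) \<in> tensor_rels A M N"
    using Suc by simp
  ultimately have "(frag_of (a, (\<Sum>t<n. b t) + b n) - frag_of (a, \<Sum>t<n. b t) - frag_of (a, b n))
     + (frag_of (a, \<Sum>t<n. b t) - (\<Sum>t<n. frag_of (a, b t))) \<in> tensor_rels A M N"
    by (rule tensor_rels.add)
  then show ?case by (simp add: algebra_simps)
qed

context zpg begin

definition phg :: "nat \<Rightarrow> 'r \<times> 'r \<Rightarrow> 'r" where "phg k = (\<lambda>(a, b). hc a k * b)"

definition proj :: "nat \<Rightarrow> nat \<Rightarrow> ('r \<times> 'r \<Rightarrow>\<^sub>0 int) \<Rightarrow> ('r \<times> 'r \<Rightarrow>\<^sub>0 int)" where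
  "proj k l = frag_extend (\<lambda>(a, b). frag_of (hc a k, hc b l))"

lemma Phi_flin: "Phi_map p Rg x = (\<lambda>k. if k < p then flin (phg k) x else 0)"
proof
  fix k
  show "Phi_map p Rg x k = (if k < p then flin (phg k) x else 0)"
    unfolding Phi_map_def flin_def phg_def hc_def by (auto intro!: sum.cong simp: mult.assoc)
qed

lemma phg_of [simp]: "flin (phg k) (frag_of (a, b)) = hc a k * b" by (simp add: phg_def)

lemma proj_of [simp]: "proj k l (frag_of (a, b)) = frag_of (hc a k, hc b l)" by (simp add: proj_def)

lemma proj_keys: "k < p \<Longrightarrow> l < p \<Longrightarrow> Poly_Mapping.keys (proj k l x) \<subseteq> Rg k \<times> Rg l"
  unfolding proj_def using keys_frag_extend[of "\<lambda>(a, b). frag_of (hc a k, hc b l)" x] hc_in by fastforce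

lemma proj_rels:
  assumes "x \<in> tensor_rels (Rg 0) UNIV UNIV" "k < p" "l < p"
  shows "proj k l x \<in> tensor_rels (Rg 0) (Rg k) (Rg l)"
  unfolding proj_def
proof (rule tr_extend[OF assms(1)])
  fix a a' b :: 'r
  show "(case (a + a', b) of (a, b) \<Rightarrow> frag_of (hc a k, hc b l)) - (case (a, b) of (a, b) \<Rightarrow> frag_of (hc a k, hc b l)) -
        (case (a', b) of (a, b) \<Rightarrow> frag_of (hc a k, hc b l)) \<in> tensor_rels (Rg 0) (Rg k) (Rg l)"
    using tensor_rels.lin1[of "hc a k" "Rg k" "hc a' k" "hc b l" "Rg l" "Rg 0"] hc_in assms(2,3)
    by (simp add: hc_add)
next
  fix a b b' :: 'r
  show "(case (a, b + b') of (a, b) \<Rightarrow> frag_of (hc a k, hc b l)) - (case (a, b) of (a, b) \<Rightarrow> frag_of (hc a k, hc b l)) -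
        (case (a, b') of (a, b) \<Rightarrow> frag_of (hc a k, hc b l)) \<in> tensor_rels (Rg 0) (Rg k) (Rg l)"
    using tensor_rels.lin2[of "hc a k" "Rg k" "hc b l" "Rg l" "hc b' l" "Rg 0"] hc_in assms(2,3)
    by (simp add: hc_add)
next
  fix r a b :: 'r assume r: "r \<in> Rg 0"
  show "(case (r * a, b) of (a, b) \<Rightarrow> frag_of (hc a k, hc b l)) - (case (a, r * b) of (a, b) \<Rightarrow> frag_of (hc a k, hc b l))
        \<in> tensor_rels (Rg 0) (Rg k) (Rg l)"
    using tensor_rels.bal[OF r, of "hc a k" "Rg k" "hc b l" "Rg l"] hc_in assms(2,3) r
    by (simp add: hc_R0_mul)
qed

lemma proj_id:
  assumes "Poly_Mapping.keys x \<subseteq> Rg k \<times> Rg l" "k < p" "l < p"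
  shows "proj k l x = x"
  using assms(1)
proof (induction x rule: frag_induction)
  case zero then show ?case by (simp add: proj_def)
next
  case (one y)
  then obtain a b where y: "y = (a, b)" "a \<in> Rg k" "b \<in> Rg l" by auto
  then show ?case using hc_homog[OF assms(2) y(2)] hc_homog[OF assms(3) y(3)] by simp
next
  case (diff y1 y2) then show ?case by (simp add: proj_def frag_extend_diff)
qed

lemma mu_proj:
  assumes "k < p" "l < p"
  shows "flin mm (proj k l x) = hc (flin (phg k) x) ((k + l) mod p)"
proof -
  have "Poly_Mapping.keys x \<subseteq> UNIV" by simp
  then show ?thesis
  proof (induction x rule: frag_induction)
    case zero then show ?case by (simp add: proj_def hc_zero)
  next
    case (one y)
    obtain a b where y: "y = (a, b)" by (cases y)
    have "hc (hc a k * b) ((k + l) mod p) = hc a k * hc b (((k + l) mod p + p - k) mod p)"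
      using hc_mul_homog[OF assms(1) hc_in[OF assms(1)], of a b] p_pos by simp
    then show ?case using y modid3[OF assms] by (simp add: phg_def)
  next
    case (diff y1 y2) then show ?case by (simp add: proj_def frag_extend_diff flin_diff hc_diff)
  qed
qed

lemma phg_homog:
  assumes "Poly_Mapping.keys x \<subseteq> Rg k \<times> Rg l" "k < p"
  shows "flin (phg k') x = (if k' = k then flin mm x else 0)"
  using assms(1)
proof (induction x rule: frag_induction)
  case zero then show ?case by simp
next
  case (one y)
  then obtain a b where y: "y = (a, b)" "a \<in> Rg k" by auto
  then show ?case using hc_homog[OF assms(2) y(2)] by (simp add: phg_def)
next
  case (diff y1 y2) then show ?case by (simp add: flin_diff)
qed

lemma decomp_rels: "x - (\<Sum>k<p. \<Sum>l<p. proj k l x) \<in> tensor_rels (Rg 0) UNIV UNIV"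
proof -
  let ?T = "tensor_rels (Rg 0) (UNIV::'r set) UNIV"
  have "Poly_Mapping.keys x \<subseteq> UNIV" by simp
  then show ?thesis
  proof (induction x rule: frag_induction)
    case zero then show ?case by (simp add: proj_def tensor_rels.zero)
  next
    case (one y)
    obtain a b where y: "y = (a, b)" by (cases y)
    have s1: "frag_of (a, b) - (\<Sum>k<p. frag_of (hc a k, b)) \<in> ?T"
      using tr_sum_left[of UNIV p "\<lambda>k. hc a k" b UNIV "Rg 0"] hc_sum[of a] by simp
    have s2: "(\<Sum>k<p. frag_of (hc a k, b)) - (\<Sum>k<p. \<Sum>l<p. frag_of (hc a k, hc b l)) \<in> ?T"
    proof (rule tr_sum_diff)
      fix k assume "k \<in> {..<p}"
      show "frag_of (hc a k, b) - (\<Sum>l<p. frag_of (hc a k, hc b l)) \<in> ?T"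
        using tr_sum_right[of UNIV p "\<lambda>l. hc b l" "hc a k" UNIV "Rg 0"] hc_sum[of b] by simp
    qed
    show ?case using tr_trans[OF s1 s2] y by simp
  next
    case (diff y1 y2)
    have pd: "(\<Sum>k<p. \<Sum>l<p. proj k l (y1 - y2)) = (\<Sum>k<p. \<Sum>l<p. proj k l y1) - (\<Sum>k<p. \<Sum>l<p. proj k l y2)"
      by (simp add: proj_def frag_extend_diff sum_subtractf)
    have eq: "(y1 - y2) - (\<Sum>k<p. \<Sum>l<p. proj k l (y1 - y2)) =
          (y1 - (\<Sum>k<p. \<Sum>l<p. proj k l y1)) - (y2 - (\<Sum>k<p. \<Sum>l<p. proj k l y2))"
      unfolding pd by (simp add: algebra_simps)
    show ?case unfolding eq by (rule tr_diff[OF diff(1) diff(2)])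
  qed
qed

lemma phg_vanish:
  assumes "x \<in> tensor_rels (Rg 0) M N" "k < p"
  shows "flin (phg k) x = 0"
  using assms(1)
  by (rule tr_vanish) (simp_all add: phg_def hc_add hc_R0_mul[OF _ assms(2)] algebra_simps)

lemma mm_vanish: "x \<in> tensor_rels A M N \<Longrightarrow> flin mm x = 0"
  by (rule tr_vanish) (simp_all add: algebra_simps)

lemma Phi_iff: "Phi_iso p Rg \<longleftrightarrow>
   (\<forall>f. (\<forall>k\<ge>p. f k = 0) \<longrightarrow> (\<exists>x. Phi_map p Rg x = f)) \<and>
   (\<forall>x. Phi_map p Rg x = (\<lambda>_. 0) \<longrightarrow> x \<in> tensor_rels (Rg 0) UNIV UNIV)"
proof -
  have fs: "formal_sums UNIV UNIV = UNIV" by (simp add: formal_sums_def)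
  have im: "Phi_map p Rg x \<in> {f. \<forall>k\<ge>p. f k = 0}" for x by (simp add: Phi_flin)
  have van: "x \<in> tensor_rels (Rg 0) UNIV UNIV \<Longrightarrow> Phi_map p Rg x = (\<lambda>_. 0)" for x
    by (rule ext) (simp add: Phi_flin phg_vanish)
  have A: "(Phi_map p Rg ` UNIV = {f. \<forall>k\<ge>p. f k = 0}) \<longleftrightarrow> (\<forall>f. (\<forall>k\<ge>p. f k = 0) \<longrightarrow> (\<exists>x. Phi_map p Rg x = f))"
  proof
    assume h: "Phi_map p Rg ` UNIV = {f. \<forall>k\<ge>p. f k = 0}"
    show "\<forall>f. (\<forall>k\<ge>p. f k = 0) \<longrightarrow> (\<exists>x. Phi_map p Rg x = f)"
    proof (intro allI impI)
      fix f :: "nat \<Rightarrow> 'r" assume "\<forall>k\<ge>p. f k = 0"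
      then have "f \<in> Phi_map p Rg ` UNIV" using h by simp
      then show "\<exists>x. Phi_map p Rg x = f" by (auto simp: image_iff)
    qed
  next
    assume h: "\<forall>f. (\<forall>k\<ge>p. f k = 0) \<longrightarrow> (\<exists>x. Phi_map p Rg x = f)"
    show "Phi_map p Rg ` UNIV = {f. \<forall>k\<ge>p. f k = 0}"
    proof (intro equalityI subsetI)
      fix f :: "nat \<Rightarrow> 'r" assume "f \<in> Phi_map p Rg ` UNIV"
      then show "f \<in> {f. \<forall>k\<ge>p. f k = 0}" using im by auto
    next
      fix f :: "nat \<Rightarrow> 'r" assume "f \<in> {f. \<forall>k\<ge>p. f k = 0}"
      then obtain x where "Phi_map p Rg x = f" using h by auto
      then show "f \<in> Phi_map p Rg ` UNIV" by auto
    qed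
  qed
  have B: "(\<forall>x\<in>UNIV. Phi_map p Rg x = (\<lambda>_. 0) \<longleftrightarrow> x \<in> tensor_rels (Rg 0) UNIV UNIV) \<longleftrightarrow>
      (\<forall>x. Phi_map p Rg x = (\<lambda>_. 0) \<longrightarrow> x \<in> tensor_rels (Rg 0) UNIV UNIV)"
    using van by auto
  show ?thesis unfolding Phi_iso_def fs A B ..
qed

lemma F_to_G:
  assumes F: "\<forall>k<p. \<forall>l<p. mult_map_iso (Rg 0) (Rg k) (Rg l) (Rg ((k + l) mod p))"
  shows "Phi_iso p Rg"
  unfolding Phi_iff
proof (intro conjI allI impI)
  fix f :: "nat \<Rightarrow> 'r" assume f: "\<forall>k\<ge>p. f k = 0"
  have ex: "\<forall>q. \<exists>X. fst q < p \<longrightarrow> snd q < p \<longrightarrow>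
     Poly_Mapping.keys X \<subseteq> Rg (fst q) \<times> Rg ((snd q + p - fst q) mod p) \<and> flin mm X = hc (f (fst q)) (snd q)"
  proof
    fix q :: "nat \<times> nat"
    obtain k m where q: "q = (k, m)" by (cases q)
    show "\<exists>X. fst q < p \<longrightarrow> snd q < p \<longrightarrow>
     Poly_Mapping.keys X \<subseteq> Rg (fst q) \<times> Rg ((snd q + p - fst q) mod p) \<and> flin mm X = hc (f (fst q)) (snd q)"
    proof (cases "k < p \<and> m < p")
      case True
      let ?l = "(m + p - k) mod p"
      have l: "?l < p" using p_pos by simp
      have km: "(k + ?l) mod p = m" using mod_shift True by blast
      have "mult_map_iso (Rg 0) (Rg k) (Rg ?l) (Rg ((k + ?l) mod p))" using F True l by blast
      then have "flin mm ` formal_sums (Rg k) (Rg ?l) = Rg m" unfolding mmi_iff km by blast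
      moreover have "hc (f k) m \<in> Rg m" using hc_in True by blast
      ultimately obtain X where "X \<in> formal_sums (Rg k) (Rg ?l)" "flin mm X = hc (f k) m" by force
      then show ?thesis using q by (auto simp: formal_sums_def)
    qed (use q in auto)
  qed
  obtain X where X: "\<And>q. fst q < p \<Longrightarrow> snd q < p \<Longrightarrow>
     Poly_Mapping.keys (X q) \<subseteq> Rg (fst q) \<times> Rg ((snd q + p - fst q) mod p) \<and> flin mm (X q) = hc (f (fst q)) (snd q)"
    using choice[OF ex] by blast
  define x where "x = (\<Sum>k<p. \<Sum>m<p. X (k, m))"
  have "Phi_map p Rg x = f"
  proof
    fix k'
    show "Phi_map p Rg x k' = f k'"
    proof (cases "k' < p")
      case False then show ?thesis using f by (simp add: Phi_flin)
    next
      case True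
      have "flin (phg k') x = (\<Sum>k<p. \<Sum>m<p. flin (phg k') (X (k, m)))"
        unfolding x_def by (simp add: flin_sum)
      also have "\<dots> = (\<Sum>k<p. \<Sum>m<p. if k' = k then hc (f k) m else 0)"
      proof (intro sum.cong refl)
        fix k m assume k: "k \<in> {..<p}" and m: "m \<in> {..<p}"
        show "flin (phg k') (X (k, m)) = (if k' = k then hc (f k) m else 0)"
          using phg_homog[of "X (k, m)" k "(m + p - k) mod p" k'] X[of "(k, m)"] k m by auto
      qed
      also have "\<dots> = (\<Sum>m<p. hc (f k') m)"
        using True by (simp add: sum.swap[of _ "{..<p}" "{..<p}"] if_distrib sum.delta)
      also have "\<dots> = f k'" using hc_sum[of "f k'"] by simp
      finally show ?thesis using True by (simp add: Phi_flin)
    qed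
  qed
  then show "\<exists>x. Phi_map p Rg x = f" by blast
next
  fix x assume x0: "Phi_map p Rg x = (\<lambda>_. 0)"
  let ?T = "tensor_rels (Rg 0) (UNIV::'r set) UNIV"
  have pr: "proj k l x \<in> ?T" if k: "k < p" and l: "l < p" for k l
  proof -
    have "flin (phg k) x = 0" using x0 k unfolding Phi_flin by (metis (mono_tags))
    then have "flin mm (proj k l x) = 0" using mu_proj[OF k l] hc_zero by simp
    moreover have "proj k l x \<in> formal_sums (Rg k) (Rg l)" using proj_keys[OF k l] by (simp add: formal_sums_def)
    moreover have "mult_map_iso (Rg 0) (Rg k) (Rg l) (Rg ((k + l) mod p))" using F k l by blast
    ultimately have "proj k l x \<in> tensor_rels (Rg 0) (Rg k) (Rg l)" unfolding mmi_iff by blast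
    then show ?thesis by (rule tr_mono) auto
  qed
  have "(\<Sum>k<p. \<Sum>l<p. proj k l x) \<in> ?T" using pr by (auto intro!: tr_sum)
  from tensor_rels.add[OF decomp_rels[of x] this] show "x \<in> ?T" by simp
qed

lemma G_to_F:
  assumes G: "Phi_iso p Rg"
  shows "\<forall>k<p. \<forall>l<p. mult_map_iso (Rg 0) (Rg k) (Rg l) (Rg ((k + l) mod p))"
proof (intro allI impI)
  fix k l assume k: "k < p" and l: "l < p"
  let ?m = "(k + l) mod p"
  have m: "?m < p" using p_pos by simp
  have G1: "\<And>f. (\<forall>k\<ge>p. f k = 0) \<Longrightarrow> \<exists>x. Phi_map p Rg x = f"
   and G2: "\<And>x. Phi_map p Rg x = (\<lambda>_. 0) \<Longrightarrow> x \<in> tensor_rels (Rg 0) UNIV UNIV"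
    using G unfolding Phi_iff by blast+
  show "mult_map_iso (Rg 0) (Rg k) (Rg l) (Rg ?m)"
    unfolding mmi_iff
  proof (intro conjI ballI iffI)
    show "flin mm ` formal_sums (Rg k) (Rg l) = Rg ?m"
    proof
      show "flin mm ` formal_sums (Rg k) (Rg l) \<subseteq> Rg ?m"
        using mu_in k l by (auto simp: formal_sums_def)
      show "Rg ?m \<subseteq> flin mm ` formal_sums (Rg k) (Rg l)"
      proof
        fix z assume z: "z \<in> Rg ?m"
        obtain x where x: "Phi_map p Rg x = (\<lambda>k'. if k' = k then z else 0)"
          using G1[of "\<lambda>k'. if k' = k then z else 0"] k by auto
        have "flin (phg k) x = z" using fun_cong[OF x, of k] k by (simp add: Phi_flin)
        then have "flin mm (proj k l x) = z" using mu_proj[OF k l] hc_homog[OF m z] by simp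
        moreover have "proj k l x \<in> formal_sums (Rg k) (Rg l)" using proj_keys[OF k l] by (simp add: formal_sums_def)
        ultimately show "z \<in> flin mm ` formal_sums (Rg k) (Rg l)" by force
      qed
    qed
  next
    fix x assume x: "x \<in> formal_sums (Rg k) (Rg l)" and x0: "flin mm x = 0"
    have kx: "Poly_Mapping.keys x \<subseteq> Rg k \<times> Rg l" using x by (simp add: formal_sums_def)
    have "Phi_map p Rg x = (\<lambda>_. 0)"
      using phg_homog[OF kx k] x0 by (auto simp: Phi_flin)
    then have "x \<in> tensor_rels (Rg 0) UNIV UNIV" by (rule G2)
    then have "proj k l x \<in> tensor_rels (Rg 0) (Rg k) (Rg l)" by (rule proj_rels[OF _ k l])
    then show "x \<in> tensor_rels (Rg 0) (Rg k) (Rg l)" using proj_id[OF kx k l] by simp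
  next
    fix x assume "x \<in> tensor_rels (Rg 0) (Rg k) (Rg l)"
    then show "flin mm x = 0" by (rule mm_vanish)
  qed
qed

lemma eq_FG: "(\<forall>k<p. \<forall>l<p. mult_map_iso (Rg 0) (Rg k) (Rg l) (Rg ((k + l) mod p))) \<longleftrightarrow> Phi_iso p Rg"
  using F_to_G G_to_F by blast

end

theorem proposition3p2:
  fixes p :: nat and phi :: "'f::field \<Rightarrow> 'r::comm_ring_1" and Rg :: "nat \<Rightarrow> 'r set"
  assumes "prime p"
    and "F_algebra phi"
    and "zp_grading p phi Rg"
  defines "I \<equiv> fixed_ideal p Rg"
  shows "(Spec (sub_ring (Rg 0) Quot I) = {} \<longleftrightarrow> I = Rg 0)
       \<and> (I = Rg 0 \<longleftrightarrow> (\<forall>i\<in>{1..p-1}. pow_span (Rg i) p = Rg 0))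
       \<and> ((\<forall>i\<in>{1..p-1}. pow_span (Rg i) p = Rg 0) \<longleftrightarrow> pow_span (Rg 1) p = Rg 0)
       \<and> (pow_span (Rg 1) p = Rg 0 \<longleftrightarrow> (\<forall>i\<in>{1..p-1}. mul_span (Rg i) (Rg (p - i)) = Rg 0))
       \<and> ((\<forall>i\<in>{1..p-1}. mul_span (Rg i) (Rg (p - i)) = Rg 0) \<longleftrightarrow>
            (\<forall>k<p. \<forall>l<p. mult_map_iso (Rg 0) (Rg k) (Rg l) (Rg ((k + l) mod p))))
       \<and> ((\<forall>k<p. \<forall>l<p. mult_map_iso (Rg 0) (Rg k) (Rg l) (Rg ((k + l) mod p))) \<longleftrightarrow> Phi_iso p Rg)"
proof -
  interpret Z: zpg p phi Rg by (rule zpg.intro[OF assms(1-3)])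
  show ?thesis unfolding I_def
    using Z.eq_AB Z.eq_BC Z.eq_CD Z.eq_DE Z.eq_EF Z.eq_FG by (intro conjI) assumption+
qed

end
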